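(* Let $h\in\mathbb N$ and let $F$ be an $h$-flipclass of $\mathfrak S_n$; let $e=|E(F)|$. Then there exists an $h$-flipclass $F'$ of $\mathfrak S_e$ that is isomorphic to $F$. In particular, if $F$ is irreducible, such an $F'$ may be found in $\mathfrak S_{h+1}$.
   Context: $\mathfrak S_n$ is the symmetric group on $[n]$, $T$ its transpositions, $\ell$ the length w.r.t. simple transpositions. The Bruhat graph $B(\mathfrak S_n)$ has an edge $x\xrightarrow{t}y$ iff $yx^{-1}=t\in T$ and $\ell(x)<\ell(y)$. $P_h(u,v)$ is the set of paths $u=x_0\to\cdots\to x_h=v$ of length $h$. Between two fixed vertices there are $0$ or $2$ paths of length $2$; each is the flip of the other. The $i$-th flip operator $f_i$ ($i\in[h-1]$) on $P_h(u,v)$ replaces $x_{i-1}\to x_i\to x_{i+1}$ by its flip; an $h$-flipclass of $\mathfrak S_n$ is an orbit of $\langle f_1,\dots,f_{h-1}\rangle$ on some $P_h(u,v)$. For a path $\Gamma$ with edge labels $t_1,\dots,t_h$, $G(\Gamma)$ is the undirected multigraph whose vertex set is $\{a\in[n]: t_i(a)\ne a \text{ for some } i\}$ with an edge (labelled $i$) between $a$ and $b$ whenever $t_i=(a,b)$. For a flipclass $F$, $E(F)$ denotes the vertex set of $G(\Gamma)$ for any $\Gamma\in F$ (it does not depend on $\Gamma$), and $F$ is irreducible if $G(\Gamma)$ is connected for $\Gamma\in F$ (again independent of $\Gamma$). Isomorphism: for an $h$-flipclass $F$ of $\mathfrak S_n$ and an $h$-flipclass $F'$ of $\mathfrak S_m$,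 an isomorphism from $F$ to $F'$ is a pair $(f,g)$ where $f$ is a bijection from the set of permutations occurring on paths of $F$ onto the set of permutations occurring on paths of $F'$ such that applying $f$ vertexwise gives a bijection $F\to F'$ commuting with the flip operators $f_i$; $g$ is a bijection from the set of transpositions labelling edges of paths of $F$ onto the corresponding set for $F'$, such that whenever $\Gamma\in F$ has label sequence $(t_1,\dots,t_h)$, its image has label sequence $(g(t_1),\dots,g(t_h))$; and $g$ is order-preserving for the lexicographic orders on transpositions (writing transpositions as $(a,b)$ with $a<b$, $(a,b)<(c,d)$ iff $a<c$, or $a=c$ and $b<d$). *)

theory Defs
  imports "HOL-Combinatorics.Permutations"
begin

text \<open>Permutations of [n] = {1..n} are functions nat => nat permuting {1..n}.
  Products are compositions of functions: (x y)(a) = x (y a).\<close>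

definition simple_transps :: "nat \<Rightarrow> (nat \<Rightarrow> nat) set" where
  "simple_transps n = {transpose i (Suc i) | i. 1 \<le> i \<and> Suc i \<le> n}"

definition len :: "nat \<Rightarrow> (nat \<Rightarrow> nat) \<Rightarrow> nat" where
  "len n x = (LEAST k. \<exists>ws. length ws = k \<and> set ws \<subseteq> simple_transps n \<and> foldr (\<circ>) ws id = x)"

definition is_transp :: "(nat \<Rightarrow> nat) \<Rightarrow> bool" where
  "is_transp t \<longleftrightarrow> (\<exists>a b. a \<noteq> b \<and> t = transpose a b)"

definition bedge :: "nat \<Rightarrow> (nat \<Rightarrow> nat) \<Rightarrow> (nat \<Rightarrow> nat) \<Rightarrow> bool" where
  "bedge n x y \<longleftrightarrow> x permutes {1..n} \<and> y permutes {1..n} \<and>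
     is_transp (y \<circ> inv x) \<and> len n x < len n y"

definition paths :: "nat \<Rightarrow> nat \<Rightarrow> (nat \<Rightarrow> nat) \<Rightarrow> (nat \<Rightarrow> nat) \<Rightarrow> (nat \<Rightarrow> nat) list set" where
  "paths n h u v = {p. length p = Suc h \<and> hd p = u \<and> last p = v \<and>
     (\<forall>i<h. bedge n (p ! i) (p ! Suc i))}"

definition labels :: "(nat \<Rightarrow> nat) list \<Rightarrow> (nat \<Rightarrow> nat) list" where
  "labels p = map (\<lambda>i. p ! Suc i \<circ> inv (p ! i)) [0..<length p - 1]"

definition flip_vertex :: "nat \<Rightarrow> (nat \<Rightarrow> nat) \<Rightarrow> (nat \<Rightarrow> nat) \<Rightarrow> (nat \<Rightarrow> nat) \<Rightarrow> (nat \<Rightarrow> nat)" where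
  "flip_vertex n a b c = (THE b'. b' \<noteq> b \<and> bedge n a b' \<and> bedge n b' c)"

definition flip_op :: "nat \<Rightarrow> nat \<Rightarrow> (nat \<Rightarrow> nat) list \<Rightarrow> (nat \<Rightarrow> nat) list" where
  "flip_op n i p = p[i := flip_vertex n (p ! (i - 1)) (p ! i) (p ! Suc i)]"

definition flip_steps :: "nat \<Rightarrow> nat \<Rightarrow> (nat \<Rightarrow> nat) \<Rightarrow> (nat \<Rightarrow> nat) \<Rightarrow>
    ((nat \<Rightarrow> nat) list \<times> (nat \<Rightarrow> nat) list) set" where
  "flip_steps n h u v = {(p, q). p \<in> paths n h u v \<and> (\<exists>i. 1 \<le> i \<and> i < h \<and> q = flip_op n i p)}"

text \<open>h-flipclass of S_n: orbit of the group generated by f_1..f_{h-1} on some P_h(u,v).\<close>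
definition flipclass :: "nat \<Rightarrow> nat \<Rightarrow> (nat \<Rightarrow> nat) list set \<Rightarrow> bool" where
  "flipclass n h F \<longleftrightarrow> (\<exists>u v p. p \<in> paths n h u v \<and>
     F = {q. (p, q) \<in> (flip_steps n h u v \<union> (flip_steps n h u v)\<inverse>)\<^sup>*})"

text \<open>Vertex set of G(Gamma), and E(F) = that set for (any) Gamma in F.\<close>
definition Gverts :: "(nat \<Rightarrow> nat) list \<Rightarrow> nat set" where
  "Gverts p = {a. \<exists>t \<in> set (labels p). t a \<noteq> a}"

definition EF :: "(nat \<Rightarrow> nat) list set \<Rightarrow> nat set" where
  "EF F = Gverts (SOME p. p \<in> F)"

definition Gconnected :: "(nat \<Rightarrow> nat) list \<Rightarrow> bool" where
  "Gconnected p \<longleftrightarrow> (\<forall>a \<in> Gverts p. \<forall>b \<in> Gverts p.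
     (a, b) \<in> {(x, y). x \<noteq> y \<and> transpose x y \<in> set (labels p)}\<^sup>*)"

definition irreducible_fc :: "(nat \<Rightarrow> nat) list set \<Rightarrow> bool" where
  "irreducible_fc F \<longleftrightarrow> (\<exists>p \<in> F. Gconnected p)"

definition fc_verts :: "(nat \<Rightarrow> nat) list set \<Rightarrow> (nat \<Rightarrow> nat) set" where
  "fc_verts F = (\<Union>p \<in> F. set p)"

definition fc_labels :: "(nat \<Rightarrow> nat) list set \<Rightarrow> (nat \<Rightarrow> nat) set" where
  "fc_labels F = (\<Union>p \<in> F. set (labels p))"

definition tpair :: "(nat \<Rightarrow> nat) \<Rightarrow> nat \<times> nat" where
  "tpair t = (Min {a. t a \<noteq> a}, Max {a. t a \<noteq> a})"

definition tlex_less :: "(nat \<Rightarrow> nat) \<Rightarrow> (nat \<Rightarrow> nat) \<Rightarrow> bool" where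
  "tlex_less t s \<longleftrightarrow> fst (tpair t) < fst (tpair s) \<or>
     (fst (tpair t) = fst (tpair s) \<and> snd (tpair t) < snd (tpair s))"

definition fc_iso :: "nat \<Rightarrow> nat \<Rightarrow> nat \<Rightarrow> (nat \<Rightarrow> nat) list set \<Rightarrow> (nat \<Rightarrow> nat) list set \<Rightarrow> bool" where
  "fc_iso n m h F F' \<longleftrightarrow> (\<exists>f g.
     bij_betw f (fc_verts F) (fc_verts F') \<and>
     bij_betw (map f) F F' \<and>
     (\<forall>p \<in> F. \<forall>i. 1 \<le> i \<and> i < h \<longrightarrow> map f (flip_op n i p) = flip_op m i (map f p)) \<and>
     bij_betw g (fc_labels F) (fc_labels F') \<and>
     (\<forall>p \<in> F. labels (map f p) = map g (labels p)) \<and>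
     (\<forall>t \<in> fc_labels F. \<forall>s \<in> fc_labels F. tlex_less t s \<longrightarrow> tlex_less (g t) (g s)))"

end

theory Submission
  imports Defs
begin

definition Iset :: "nat \<Rightarrow> (nat \<Rightarrow> nat) \<Rightarrow> (nat \<times> nat) set" where
  "Iset n w = {(i,j). i \<in> {1..n} \<and> j \<in> {1..n} \<and> i < j \<and> w j < w i}"

definition Ninv :: "nat \<Rightarrow> (nat \<Rightarrow> nat) \<Rightarrow> nat" where
  "Ninv n w = card (Iset n w)"

lemma finite_Iset: "finite (Iset n w)"
  by (rule finite_subset[of _ "{1..n} \<times> {1..n}"]) (auto simp: Iset_def)

lemma Ninv_lt:
  assumes ab: "a < b" "a \<in> {1..n}" "b \<in> {1..n}" and w: "w a < w b"
  shows "Ninv n w < Ninv n (w \<circ> transpose a b)"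
proof -
  define g where "g = (\<lambda>(i::nat,j::nat). if (i = a \<and> a < j \<and> j < b) \<or> (j = b \<and> a < i \<and> i < b) then (i,j)
      else (transpose a b i, transpose a b j))"
  have inj: "inj_on g (Iset n w)"
  proof (rule inj_onI)
    fix p q assume p: "p \<in> Iset n w" and q: "q \<in> Iset n w" and e: "g p = g q"
    obtain i j where pij: "p = (i,j)" by (cases p)
    obtain k l where qkl: "q = (k,l)" by (cases q)
    show "p = q" using p q e ab unfolding pij qkl g_def Iset_def
      by (auto simp: transpose_def split: if_splits)
  qed
  have sub: "g ` Iset n w \<subseteq> Iset n (w \<circ> transpose a b) - {(a,b)}"
  proof
    fix y assume "y \<in> g ` Iset n w"
    then obtain i j where ij: "(i,j) \<in> Iset n w" "y = g (i,j)" by auto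
    show "y \<in> Iset n (w \<circ> transpose a b) - {(a,b)}"
      using ij ab w unfolding g_def Iset_def
      by (auto simp: transpose_def split: if_splits)
  qed
  have ab_in: "(a,b) \<in> Iset n (w \<circ> transpose a b)" using ab w by (auto simp: Iset_def)
  have "Ninv n w = card (g ` Iset n w)" using inj by (simp add: Ninv_def card_image)
  also have "\<dots> \<le> card (Iset n (w \<circ> transpose a b) - {(a,b)})"
    by (rule card_mono) (use sub finite_Iset in auto)
  also have "\<dots> < Ninv n (w \<circ> transpose a b)" unfolding Ninv_def
    using card_Diff1_less[OF finite_Iset ab_in] by simp
  finally show ?thesis .
qed

lemma card_le_Suc_Diff: "finite A \<Longrightarrow> card A \<le> Suc (card (A - {x}))"
  by (cases "x \<in> A") (auto simp: card_Diff_singleton_if)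

lemma Ninv_simple_le:
  assumes i: "i \<in> {1..n}" "Suc i \<in> {1..n}" and w: "w i \<noteq> w (Suc i)"
  shows "Ninv n (w \<circ> transpose i (Suc i)) \<le> Suc (Ninv n w)"
proof (cases "w (Suc i) < w i")
  case True
  have X: "Ninv n (w \<circ> transpose i (Suc i)) < Ninv n ((w \<circ> transpose i (Suc i)) \<circ> transpose i (Suc i))"
    by (rule Ninv_lt) (use i True in auto)
  have Y: "(w \<circ> transpose i (Suc i)) \<circ> transpose i (Suc i) = w"
    by (auto simp: fun_eq_iff)
  from X show ?thesis unfolding Y by simp
next
  case False
  define g where "g = (\<lambda>(k::nat,l::nat). (transpose i (Suc i) k, transpose i (Suc i) l))"
  have inj: "inj_on g (Iset n (w \<circ> transpose i (Suc i)) - {(i, Suc i)})"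
    by (rule inj_onI) (auto simp: g_def transpose_def split: if_splits)
  have sub: "g ` (Iset n (w \<circ> transpose i (Suc i)) - {(i, Suc i)}) \<subseteq> Iset n w"
    using i by (auto simp: g_def Iset_def transpose_def split: if_splits)
  have "card (Iset n (w \<circ> transpose i (Suc i)) - {(i, Suc i)}) \<le> Ninv n w"
    unfolding Ninv_def using card_mono[OF finite_Iset sub] inj by (simp add: card_image)
  moreover have "card (Iset n (w \<circ> transpose i (Suc i))) \<le> Suc (card (Iset n (w \<circ> transpose i (Suc i)) - {(i, Suc i)}))"
    using finite_Iset by (rule card_le_Suc_Diff)
  ultimately show ?thesis by (simp add: Ninv_def)
qed


lemma simple_transpsE:
  assumes "s \<in> simple_transps n"
  obtains i where "s = transpose i (Suc i)" "1 \<le> i" "Suc i \<le> n"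
  using assms unfolding simple_transps_def by auto

lemma simple_permutes: "s \<in> simple_transps n \<Longrightarrow> s permutes {1..n}"
  by (erule simple_transpsE) (auto intro!: permutes_swap_id)

lemma foldr_permutes:
  "set ws \<subseteq> simple_transps n \<Longrightarrow> foldr (\<circ>) ws id permutes {1..n}"
proof (induction ws)
  case Nil
  have "foldr (\<circ>) [] id = (id::nat\<Rightarrow>nat)" by simp
  then show ?case using permutes_id by metis
next
  case (Cons s ws)
  have ws: "set ws \<subseteq> simple_transps n" using Cons.prems by simp
  have A: "foldr (\<circ>) ws id permutes {1..n}" by (rule Cons.IH[OF ws])
  have B: "s permutes {1..n}" using Cons.prems by (intro simple_permutes) simp
  have C: "foldr (\<circ>) (s # ws) id = s \<circ> foldr (\<circ>) ws id" by (simp only: foldr.simps comp_apply)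
  show ?case unfolding C by (rule permutes_compose[OF A B])
qed

lemma Iset_id: "Iset n id = {}" by (auto simp: Iset_def)
lemma Iset_id': "Iset n (\<lambda>a. a) = {}" by (auto simp: Iset_def)

lemma Ninv_lower:
  "set ws \<subseteq> simple_transps n \<Longrightarrow> Ninv n (inv (foldr (\<circ>) ws id)) \<le> length ws"
proof (induction ws)
  case Nil
  then show ?case by (simp add: Ninv_def Iset_id Iset_id')
next
  case (Cons s ws)
  let ?y = "foldr (\<circ>) ws id"
  have py: "?y permutes {1..n}" using Cons.prems foldr_permutes by auto
  obtain i where s: "s = transpose i (Suc i)" "1 \<le> i" "Suc i \<le> n"
    using Cons.prems by (auto elim: simple_transpsE)
  have "inv (s \<circ> ?y) = inv ?y \<circ> inv s"
    by (rule o_inv_distrib) (use py permutes_bij s in auto)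
  also have "\<dots> = inv ?y \<circ> transpose i (Suc i)" using s by simp
  finally have e: "inv (s \<circ> ?y) = inv ?y \<circ> transpose i (Suc i)" .
  have "inv ?y i \<noteq> inv ?y (Suc i)"
    by (simp add: inj_eq[OF permutes_inj[OF permutes_inv[OF py]]])
  then have le: "Ninv n (inv ?y \<circ> transpose i (Suc i)) \<le> Suc (Ninv n (inv ?y))"
    using s by (intro Ninv_simple_le) auto
  have ws: "set ws \<subseteq> simple_transps n" using Cons.prems by simp
  have IH: "Ninv n (inv ?y) \<le> length ws" by (rule Cons.IH[OF ws])
  have C: "foldr (\<circ>) (s # ws) id = s \<circ> ?y" by (simp only: foldr.simps comp_apply)
  have L: "length (s # ws) = Suc (length ws)" by simp
  show ?case unfolding C e L using IH le by linarith
qed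

lemma permutes_not_id_inversion:
  fixes w :: "nat \<Rightarrow> nat"
  assumes w: "w permutes {1..n}" and ne: "w \<noteq> id"
  shows "\<exists>i j. i \<in> {1..n} \<and> j \<in> {1..n} \<and> i < j \<and> w j < w i"
proof -
  have "\<exists>i. w i \<noteq> i" using ne by (auto simp: fun_eq_iff)
  define i where "i = (LEAST i. w i \<noteq> i)"
  have wi: "w i \<noteq> i" unfolding i_def using \<open>\<exists>i. w i \<noteq> i\<close> by (rule LeastI_ex[where P="\<lambda>i. w i \<noteq> i"])
  have below: "\<And>j. j < i \<Longrightarrow> w j = j" unfolding i_def using not_less_Least by blast
  have iin: "i \<in> {1..n}" using wi w by (meson permutes_not_in)
  have wiin: "w i \<in> {1..n}" using iin by (simp only: permutes_in_image[OF w])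
  have gt: "w i > i"
  proof (rule ccontr)
    assume "\<not> w i > i"
    then have "w i < i" using wi by simp
    then have "w (w i) = w i" using below by simp
    then have "w i = i" using w by (metis permutes_inj injD)
    then show False using wi by simp
  qed
  obtain k where k: "w k = i" using w by (metis permutes_surj surj_f_inv_f)
  have kin: "k \<in> {1..n}" using k w iin by (metis permutes_not_in)
  have "k \<noteq> i" using k wi by auto
  moreover have "\<not> k < i" using below k wi by (metis)
  ultimately have "i < k" by simp
  moreover have "w k < w i" using k gt by simp
  ultimately show ?thesis using iin kin by blast
qed

lemma consecutive_descent:
  fixes w :: "nat \<Rightarrow> nat"
  shows "i < j \<Longrightarrow> w j < w i \<Longrightarrow> \<exists>k. i \<le> k \<and> k < j \<and> w (Suc k) < w k"
proof (induction j)
  case 0 then show ?case by simp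
next
  case (Suc j)
  show ?case
  proof (cases "w (Suc j) < w j")
    case True then show ?thesis using Suc.prems by (intro exI[of _ j]) auto
  next
    case False
    then have wj: "w j < w i" using Suc.prems by simp
    have "i \<noteq> j" using False Suc.prems by auto
    then have ij: "i < j" using Suc.prems by simp
    from Suc.IH[OF ij wj] obtain k where "i \<le> k" "k < j" "w (Suc k) < w k" by blast
    then show ?thesis by (intro exI[of _ k]) simp
  qed
qed

lemma exists_word:
  "x permutes {1..n} \<Longrightarrow> \<exists>ws. length ws = Ninv n (inv x) \<and> set ws \<subseteq> simple_transps n \<and> foldr (\<circ>) ws id = x"
proof (induction "Ninv n (inv x)" arbitrary: x rule: less_induct)
  case less
  show ?case
  proof (cases "x = id")
    case True
    then show ?thesis by (intro exI[of _ "[]"]) (auto simp: Ninv_def Iset_id Iset_id')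
  next
    case False
    let ?w = "inv x"
    have bx: "bij x" using less.prems by (rule permutes_bij)
    have pw: "?w permutes {1..n}" using less.prems by (rule permutes_inv)
    have "?w \<noteq> id"
    proof
      assume "inv x = id"
      then have "inv (inv x) = inv id" by simp
      then have "x = id" using inv_inv_eq[OF bx] by simp
      with False show False by simp
    qed
    then obtain i j where ij: "i \<in> {1..n}" "j \<in> {1..n}" "i < j" "?w j < ?w i"
      using permutes_not_id_inversion[OF pw] by blast
    then obtain k where k: "i \<le> k" "k < j" "?w (Suc k) < ?w k"
      using consecutive_descent by blast
    have kin: "k \<in> {1..n}" "Suc k \<in> {1..n}" using k ij by auto
    define s where "s = transpose k (Suc k)"
    have sS: "s \<in> simple_transps n" using kin unfolding s_def simple_transps_def by auto
    let ?x' = "s \<circ> x"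
    have px': "?x' permutes {1..n}" by (rule permutes_compose[OF less.prems simple_permutes[OF sS]])
    have bs: "bij s" unfolding s_def by simp
    have isd: "inv s = s" unfolding s_def by simp
    have ie: "inv ?x' = ?w \<circ> s"
      using o_inv_distrib[OF bs bx] unfolding isd .
    have lt: "Ninv n (?w \<circ> s) < Ninv n ?w"
    proof -
      have "Ninv n (?w \<circ> s) < Ninv n ((?w \<circ> s) \<circ> transpose k (Suc k))"
        by (rule Ninv_lt) (use kin k in \<open>auto simp: s_def\<close>)
      also have "(?w \<circ> s) \<circ> transpose k (Suc k) = ?w" by (auto simp: s_def fun_eq_iff)
      finally show ?thesis .
    qed
    have le: "Ninv n ?w \<le> Suc (Ninv n (?w \<circ> s))"
    proof -
      have "Ninv n ((?w \<circ> s) \<circ> transpose k (Suc k)) \<le> Suc (Ninv n (?w \<circ> s))"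
        by (rule Ninv_simple_le) (use kin k in \<open>auto simp: s_def\<close>)
      also have "(?w \<circ> s) \<circ> transpose k (Suc k) = ?w" by (auto simp: s_def fun_eq_iff)
      finally show ?thesis .
    qed
    have lt': "Ninv n (inv ?x') < Ninv n (inv x)" using lt unfolding ie .
    from less.hyps[OF lt' px'] obtain ws where
      ws: "length ws = Ninv n (inv ?x')" "set ws \<subseteq> simple_transps n" "foldr (\<circ>) ws id = ?x'"
      by blast
    have "foldr (\<circ>) (s # ws) id = s \<circ> (s \<circ> x)" by (simp only: foldr.simps comp_apply ws(3))
    also have "\<dots> = x" by (auto simp: s_def fun_eq_iff)
    finally have f: "foldr (\<circ>) (s # ws) id = x" .
    have L: "length (s # ws) = Suc (length ws)" by simp
    have l1: "length ws = Ninv n (?w \<circ> s)" using ws(1) unfolding ie .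
    have len: "length (s # ws) = Ninv n ?w" unfolding L l1 using lt le by linarith
    have st: "set (s # ws) \<subseteq> simple_transps n" using ws(2) sS by simp
    show ?thesis using f len st by blast
  qed
qed

lemma len_eq_Ninv:
  assumes "x permutes {1..n}"
  shows "len n x = Ninv n (inv x)"
proof -
  let ?P = "\<lambda>k. \<exists>ws. length ws = k \<and> set ws \<subseteq> simple_transps n \<and> foldr (\<circ>) ws id = x"
  have P: "?P (Ninv n (inv x))" using exists_word[OF assms] by blast
  have le: "len n x \<le> Ninv n (inv x)" unfolding len_def by (rule Least_le) (rule P)
  have "?P (len n x)" unfolding len_def by (rule LeastI) (rule P)
  then obtain ws where ws: "length ws = len n x" "set ws \<subseteq> simple_transps n" "foldr (\<circ>) ws id = x"
    by blast
  have "Ninv n (inv (foldr (\<circ>) ws id)) \<le> length ws" by (rule Ninv_lower[OF ws(2)])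
  then have "Ninv n (inv x) \<le> len n x" unfolding ws(1) ws(3) .
  with le show ?thesis by simp
qed

lemma len_transp_aux:
  assumes x: "x permutes {1..n}" and ab: "a \<in> {1..n}" "b \<in> {1..n}" "a < b"
  shows "len n x < len n (transpose a b \<circ> x) \<longleftrightarrow> inv x a < inv x b"
proof -
  have pt: "transpose a b \<circ> x permutes {1..n}" using x ab by (intro permutes_compose permutes_swap_id) auto
  have ie: "inv (transpose a b \<circ> x) = inv x \<circ> transpose a b"
    using o_inv_distrib[of "transpose a b" x] x by (simp add: permutes_bij)
  have ij: "inj (inv x)" by (rule permutes_inj[OF permutes_inv[OF x]])
  have inj: "inv x a \<noteq> inv x b" using ab(3) by (simp add: inj_eq[OF ij])
  show ?thesis
  proof (cases "inv x a < inv x b")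
    case True
    then show ?thesis unfolding len_eq_Ninv[OF x] len_eq_Ninv[OF pt] ie
      using Ninv_lt[OF ab(3,1,2) True] True by blast
  next
    case False
    then have "(inv x \<circ> transpose a b) a < (inv x \<circ> transpose a b) b" using inj by simp
    then have A: "Ninv n (inv x \<circ> transpose a b) < Ninv n ((inv x \<circ> transpose a b) \<circ> transpose a b)"
      using Ninv_lt ab by blast
    have B: "(inv x \<circ> transpose a b) \<circ> transpose a b = inv x" by (auto simp: fun_eq_iff)
    from A have C: "Ninv n (inv x \<circ> transpose a b) < Ninv n (inv x)" unfolding B .
    show ?thesis unfolding len_eq_Ninv[OF x] len_eq_Ninv[OF pt] ie using False C by linarith
  qed
qed

definition inc :: "(nat \<Rightarrow> nat) \<Rightarrow> nat \<Rightarrow> nat \<Rightarrow> bool" where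
  "inc w a b \<longleftrightarrow> (a < b \<longleftrightarrow> w a < w b)"

lemma len_transp:
  assumes x: "x permutes {1..n}" and ab: "a \<in> {1..n}" "b \<in> {1..n}" "a \<noteq> b"
  shows "len n x < len n (transpose a b \<circ> x) \<longleftrightarrow> inc (inv x) a b"
proof (cases "a < b")
  case True then show ?thesis using len_transp_aux[OF x ab(1,2)] by (simp add: inc_def)
next
  case False
  then have "b < a" using ab by simp
  moreover have "inv x a \<noteq> inv x b" using ab(3) by (simp add: inj_eq[OF permutes_inj[OF permutes_inv[OF x]]])
  ultimately have ne: "inv x a \<noteq> inv x b" and ba: "b < a" by auto
  have T: "transpose b a = transpose a b" by (rule transpose_commute)
  have "len n x < len n (transpose a b \<circ> x) \<longleftrightarrow> inv x b < inv x a"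
    using len_transp_aux[OF x ab(2,1) ba] unfolding T .
  then show ?thesis using ba ne unfolding inc_def by auto
qed


definition supp :: "(nat \<Rightarrow> nat) \<Rightarrow> nat set" where
  "supp f = {z. f z \<noteq> z}"

lemma supp_transpose: "a \<noteq> b \<Longrightarrow> supp (transpose a b) = {a, b}"
  by (auto simp: supp_def transpose_def)

lemma transpose_eq_transpose:
  assumes "a \<noteq> b" "transpose a b = transpose c d"
  shows "(a = c \<and> b = d) \<or> (a = d \<and> b = c)"
proof -
  have "transpose c d a = b" using assms by (metis transpose_apply_first)
  then show ?thesis using assms(1) by (auto simp: transpose_def split: if_splits)
qed

lemma supp_transpose_comp:
  assumes "a \<noteq> b" "c \<noteq> d" "transpose a b \<noteq> transpose c d"
  shows "supp (transpose c d \<circ> transpose a b) = {a, b, c, d}"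
proof -
  have ne: "\<not> (a = c \<and> b = d) \<and> \<not> (a = d \<and> b = c)"
    using assms(3) transpose_commute by metis
  show ?thesis using assms(1,2) ne by (auto simp: supp_def transpose_def)
qed

lemma moves3:
  assumes "\<And>v. transpose r t v = f v" "f z1 \<noteq> z1" "f z2 \<noteq> z2" "f z3 \<noteq> z3"
    "z1 \<noteq> z2" "z1 \<noteq> z3" "z2 \<noteq> z3"
  shows False
  using assms by (metis transpose_apply_other)

lemma inv_comp_transp:
  assumes "bij x" "y = transpose a b \<circ> x"
  shows "y \<circ> inv x = transpose a b"
proof -
  have "x \<circ> inv x = id" using surj_iff bij_is_surj[OF assms(1)] by blast
  then show ?thesis using assms(2) by (simp add: comp_assoc)
qed

lemma bedgeD:
  assumes "bedge n x y"
  shows "\<exists>p q. p \<noteq> q \<and> p \<in> {1..n} \<and> q \<in> {1..n} \<and> y = transpose p q \<circ> x \<and> inc (inv x) p q"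
proof -
  have px: "x permutes {1..n}" and py: "y permutes {1..n}" and it: "is_transp (y \<circ> inv x)"
    and l: "len n x < len n y" using assms by (auto simp: bedge_def)
  obtain p q where pq: "p \<noteq> q" "y \<circ> inv x = transpose p q" using it by (auto simp: is_transp_def)
  have bx: "bij x" using px by (rule permutes_bij)
  have yx: "y = transpose p q \<circ> x"
  proof -
    have "y = (y \<circ> inv x) \<circ> x" using bx by (simp add: comp_assoc bij_is_inj inv_o_cancel)
    then show ?thesis using pq by simp
  qed
  have pt: "transpose p q permutes {1..n}" using pq(2) permutes_compose[OF permutes_inv[OF px] py] by simp
  have pin: "p \<in> {1..n}" using pq(1) pt by (metis permutes_not_in transpose_apply_first)
  have qin: "q \<in> {1..n}" using pq(1) pt by (metis permutes_not_in transpose_apply_second)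
  have "inc (inv x) p q" using len_transp[OF px pin qin pq(1)] l yx by simp
  then show ?thesis using pq(1) pin qin yx by blast
qed

lemma bedge_iff:
  assumes px: "x permutes {1..n}" and pq: "p \<noteq> q" "p \<in> {1..n}" "q \<in> {1..n}"
  shows "bedge n x (transpose p q \<circ> x) \<longleftrightarrow> inc (inv x) p q"
proof -
  have pt: "transpose p q \<circ> x permutes {1..n}" using px pq by (intro permutes_compose permutes_swap_id) auto
  have "(transpose p q \<circ> x) \<circ> inv x = transpose p q"
    by (rule inv_comp_transp[OF permutes_bij[OF px] refl])
  then have "is_transp ((transpose p q \<circ> x) \<circ> inv x)" using pq(1) by (auto simp: is_transp_def)
  then show ?thesis unfolding bedge_def using px pt len_transp[OF px pq(2,3,1)] by blast
qed

lemma bedge_perm: "bedge n x y \<Longrightarrow> x permutes {1..n} \<and> y permutes {1..n}"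
  by (simp add: bedge_def)

lemma bedge_len: "bedge n x y \<Longrightarrow> len n x < len n y"
  by (simp add: bedge_def)

lemma inv_transp_comp:
  assumes "bij a" shows "inv (transpose p q \<circ> a) = inv a \<circ> transpose p q"
  using o_inv_distrib[OF bij_transpose assms, of p q] by simp

lemma three_arith:
  fixes x y z X Y Z :: nat
  assumes "x \<noteq> y" "y \<noteq> z" "x \<noteq> z" "X \<noteq> Y" "Y \<noteq> Z" "X \<noteq> Z"
    and "(x < y \<longleftrightarrow> X < Y) \<and> (y < z \<longleftrightarrow> X < Z)"
  shows "((y < z \<longleftrightarrow> Y < Z) \<and> (x < z \<longleftrightarrow> X < Y)) \<noteq> ((x < z \<longleftrightarrow> X < Z) \<and> (x < y \<longleftrightarrow> Z < Y))"
  using assms by arith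

lemma mid_vertex:
  assumes ab: "bedge n a b'" and bc: "bedge n b' c"
  shows "\<exists>p q r t. p \<noteq> q \<and> r \<noteq> t \<and> p \<in> {1..n} \<and> q \<in> {1..n} \<and> r \<in> {1..n} \<and> t \<in> {1..n} \<and>
     b' = transpose p q \<circ> a \<and> c = transpose r t \<circ> b' \<and> transpose p q \<noteq> transpose r t \<and>
     inc (inv a) p q \<and> inc (inv b') r t"
proof -
  obtain p q where pq: "p \<noteq> q" "p \<in> {1..n}" "q \<in> {1..n}" "b' = transpose p q \<circ> a" "inc (inv a) p q"
    using bedgeD[OF ab] by blast
  obtain r t where rt: "r \<noteq> t" "r \<in> {1..n}" "t \<in> {1..n}" "c = transpose r t \<circ> b'" "inc (inv b') r t"
    using bedgeD[OF bc] by blast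
  have "transpose p q \<noteq> transpose r t"
  proof
    assume e: "transpose p q = transpose r t"
    have "c = a" using rt(4) pq(4) e by (auto simp: fun_eq_iff)
    moreover have "len n a < len n c" using bedge_len[OF ab] bedge_len[OF bc] by simp
    ultimately show False by simp
  qed
  then show ?thesis using pq rt by blast
qed


lemma cancel_right:
  assumes "bij a" "f \<circ> a = g \<circ> a" shows "f = g"
proof -
  have ai: "a \<circ> inv a = id" using surj_iff bij_is_surj[OF assms(1)] by blast
  have "f = (f \<circ> a) \<circ> inv a" by (simp add: comp_assoc ai)
  also have "\<dots> = (g \<circ> a) \<circ> inv a" using assms(2) by simp
  also have "\<dots> = g" by (simp add: comp_assoc ai)
  finally show ?thesis .
qed

lemma disj_factor:
  assumes d: "distinct [\<alpha>, \<beta>, \<gamma>, \<delta>]" and p: "p \<in> {\<alpha>, \<beta>, \<gamma>, \<delta>}" and q: "q \<in> {\<alpha>, \<beta>, \<gamma>, \<delta>}"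
    and pq: "p \<noteq> q"
    and H: "\<And>v. transpose r t v = (transpose \<gamma> \<delta> \<circ> transpose \<alpha> \<beta> \<circ> transpose p q) v"
  shows "transpose p q = transpose \<alpha> \<beta> \<or> transpose p q = transpose \<gamma> \<delta>"
proof (rule ccontr)
  assume nc: "\<not> ?thesis"
  have cross: "((p = \<alpha> \<or> p = \<beta>) \<and> (q = \<gamma> \<or> q = \<delta>)) \<or> ((p = \<gamma> \<or> p = \<delta>) \<and> (q = \<alpha> \<or> q = \<beta>))"
    using p q pq nc by (auto simp: transpose_commute)
  let ?f = "transpose \<gamma> \<delta> \<circ> transpose \<alpha> \<beta> \<circ> transpose p q"
  have "?f \<alpha> \<noteq> \<alpha> \<and> ?f \<beta> \<noteq> \<beta> \<and> ?f \<gamma> \<noteq> \<gamma>"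
    using cross d by (auto simp: transpose_def)
  then show False using moves3[OF H] d by auto
qed

lemma share_normal:
  assumes "\<alpha> \<noteq> \<beta>" "\<gamma> \<noteq> \<delta>" "transpose \<alpha> \<beta> \<noteq> transpose \<gamma> \<delta>" "\<not> distinct [\<alpha>, \<beta>, \<gamma>, \<delta>]"
  shows "\<exists>x y z. x \<noteq> y \<and> y \<noteq> z \<and> x \<noteq> z \<and> transpose \<alpha> \<beta> = transpose x y \<and> transpose \<gamma> \<delta> = transpose y z"
proof -
  have c: "\<alpha> = \<gamma> \<or> \<alpha> = \<delta> \<or> \<beta> = \<gamma> \<or> \<beta> = \<delta>" using assms(1,2,4) by auto
  show ?thesis
  proof (cases "\<alpha> = \<gamma>")
    case True
    then have "\<beta> \<noteq> \<delta>" using assms(3) by auto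
    then show ?thesis using True assms(1,2)
      by (intro exI[of _ \<beta>] exI[of _ \<alpha>] exI[of _ \<delta>]) (auto simp: transpose_commute)
  next
    case F1: False
    show ?thesis
    proof (cases "\<alpha> = \<delta>")
      case True
      then have "\<beta> \<noteq> \<gamma>" using assms(3) transpose_commute by metis
      then show ?thesis using True assms(1,2)
        by (intro exI[of _ \<beta>] exI[of _ \<alpha>] exI[of _ \<gamma>]) (auto simp: transpose_commute)
    next
      case F2: False
      show ?thesis
      proof (cases "\<beta> = \<gamma>")
        case True
        then have "\<alpha> \<noteq> \<delta>" using assms(3) transpose_commute by metis
        then show ?thesis using True assms(1,2)
          by (intro exI[of _ \<alpha>] exI[of _ \<beta>] exI[of _ \<delta>]) (auto simp: transpose_commute)
      next
        case False
        then have T: "\<beta> = \<delta>" using c F1 F2 by auto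
        then have "\<alpha> \<noteq> \<gamma>" using assms(3) by auto
        then show ?thesis using T assms(1,2)
          by (intro exI[of _ \<alpha>] exI[of _ \<beta>] exI[of _ \<gamma>]) (auto simp: transpose_commute)
      qed
    qed
  qed
qed

lemma mid_analysis:
  assumes ab': "bedge n a b'" and b'c: "bedge n b' c"
    and c: "c = t2 \<circ> t1 \<circ> a" and a: "bij a"
  shows "\<exists>p q r t. p \<noteq> q \<and> r \<noteq> t \<and> b' = transpose p q \<circ> a \<and>
     transpose p q \<noteq> transpose r t \<and> transpose r t \<circ> transpose p q = t2 \<circ> t1 \<and>
     (\<forall>v. transpose r t v = (t2 \<circ> t1 \<circ> transpose p q) v)"
proof -
  obtain p q r t where m: "p \<noteq> q" "r \<noteq> t" "b' = transpose p q \<circ> a" "c = transpose r t \<circ> b'"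
    "transpose p q \<noteq> transpose r t"
    using mid_vertex[OF ab' b'c] by blast
  have "(transpose r t \<circ> transpose p q) \<circ> a = (t2 \<circ> t1) \<circ> a" using m(3,4) c by (simp add: comp_assoc)
  then have e: "transpose r t \<circ> transpose p q = t2 \<circ> t1" by (rule cancel_right[OF a])
  have "\<forall>v. transpose r t v = (t2 \<circ> t1 \<circ> transpose p q) v"
  proof
    fix v
    have "transpose r t v = (transpose r t \<circ> transpose p q) (transpose p q v)" by simp
    also have "\<dots> = (t2 \<circ> t1 \<circ> transpose p q) v" unfolding e by simp
    finally show "transpose r t v = (t2 \<circ> t1 \<circ> transpose p q) v" .
  qed
  then show ?thesis using m e by blast
qed

lemma flip_unique:
  assumes ab: "bedge n a b" and bc: "bedge n b c"
  shows "\<exists>!b'. b' \<noteq> b \<and> bedge n a b' \<and> bedge n b' c"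
proof -
  have pa: "a permutes {1..n}" using bedge_perm[OF ab] by simp
  have pc: "c permutes {1..n}" using bedge_perm[OF bc] by simp
  have ba: "bij a" using pa by (rule permutes_bij)
  let ?w = "inv a"
  have iw: "inj ?w" using permutes_inj[OF permutes_inv[OF pa]] .
  obtain \<alpha> \<beta> \<gamma> \<delta> where m: "\<alpha> \<noteq> \<beta>" "\<gamma> \<noteq> \<delta>" "\<alpha> \<in> {1..n}" "\<beta> \<in> {1..n}" "\<gamma> \<in> {1..n}" "\<delta> \<in> {1..n}"
    "b = transpose \<alpha> \<beta> \<circ> a" "c = transpose \<gamma> \<delta> \<circ> b" "transpose \<alpha> \<beta> \<noteq> transpose \<gamma> \<delta>"
    using mid_vertex[OF ab bc] by blast
  let ?t1 = "transpose \<alpha> \<beta>" and ?t2 = "transpose \<gamma> \<delta>"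
  have c: "c = ?t2 \<circ> ?t1 \<circ> a" using m(7,8) by (simp add: comp_assoc)
  have supp12: "supp (?t2 \<circ> ?t1) = {\<alpha>, \<beta>, \<gamma>, \<delta>}" by (rule supp_transpose_comp[OF m(1,2,9)])
  show ?thesis
  proof (cases "distinct [\<alpha>, \<beta>, \<gamma>, \<delta>]")
    case True
    let ?b0 = "?t2 \<circ> a"
    have comm: "?t2 \<circ> ?t1 = ?t1 \<circ> ?t2" using True by (auto simp: fun_eq_iff transpose_def)
    have c0: "c = ?t1 \<circ> ?b0" using c comm by (simp add: comp_assoc)
    have pb0: "?b0 permutes {1..n}" using pa m by (intro permutes_compose permutes_swap_id) auto
    have inc1: "inc ?w \<alpha> \<beta>" using ab m bedge_iff[OF pa m(1,3,4)] by simp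
    have pb: "b permutes {1..n}" using bedge_perm[OF ab] by simp
    have inc2: "inc (inv b) \<gamma> \<delta>" using bc m(8) bedge_iff[OF pb m(2,5,6)] by simp
    have ib: "inv b = ?w \<circ> ?t1" using m(7) inv_transp_comp[OF ba] by simp
    have ib0: "inv ?b0 = ?w \<circ> ?t2" using inv_transp_comp[OF ba] by simp
    have e1: "bedge n a ?b0" unfolding bedge_iff[OF pa m(2,5,6)]
      using inc2 True unfolding ib inc_def by simp
    have e2: "bedge n ?b0 c" unfolding c0 bedge_iff[OF pb0 m(1,3,4)]
      using inc1 True unfolding ib0 inc_def by simp
    have ne: "?b0 \<noteq> b"
    proof
      assume "?b0 = b"
      then have "?t2 \<circ> a = ?t1 \<circ> a" using m(7) by simp
      then have "?t2 = ?t1" by (rule cancel_right[OF ba])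
      then show False using m(9) by simp
    qed
    show ?thesis
    proof (rule ex1I[of _ ?b0])
      show "?b0 \<noteq> b \<and> bedge n a ?b0 \<and> bedge n ?b0 c" using ne e1 e2 by blast
    next
      fix b' assume b': "b' \<noteq> b \<and> bedge n a b' \<and> bedge n b' c"
      obtain p q r t where mm: "p \<noteq> q" "r \<noteq> t" "b' = transpose p q \<circ> a"
        "transpose p q \<noteq> transpose r t" "transpose r t \<circ> transpose p q = ?t2 \<circ> ?t1"
        "\<forall>v. transpose r t v = (?t2 \<circ> ?t1 \<circ> transpose p q) v"
        using mid_analysis[of n a b' c ?t2 ?t1] b' c ba by blast
      have "supp (transpose r t \<circ> transpose p q) = {p, q, r, t}" by (rule supp_transpose_comp[OF mm(1,2,4)])
      then have pqin: "{p, q, r, t} = {\<alpha>, \<beta>, \<gamma>, \<delta>}" using mm(5) supp12 by simp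
      have "transpose p q = ?t1 \<or> transpose p q = ?t2"
        by (rule disj_factor[OF True _ _ mm(1)]) (use pqin mm(6) in auto)
      then show "b' = ?b0" using b' mm(3) m(7) by auto
    qed
  next
    case False
    obtain x y z where xyz: "x \<noteq> y" "y \<noteq> z" "x \<noteq> z" "?t1 = transpose x y" "?t2 = transpose y z"
      using share_normal[OF m(1,2,9) False] by blast
    have sx: "{\<alpha>, \<beta>, \<gamma>, \<delta>} = {x, y, z}"
      using supp12 supp_transpose_comp[OF xyz(1,2)] xyz by (metis insert_absorb2 insert_commute transpose_eq_transpose)
    have xin: "x \<in> {1..n}" "y \<in> {1..n}" "z \<in> {1..n}" using sx m(3-6) by auto
    have pb: "b permutes {1..n}" using bedge_perm[OF ab] by simp
    have b: "b = transpose x y \<circ> a" using m(7) xyz(4) by simp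
    have cb: "c = transpose y z \<circ> b" using m(8) xyz(5) by simp
    have ib: "inv b = ?w \<circ> transpose x y" using b inv_transp_comp[OF ba] by simp
    have P1: "inc ?w x y \<and> inc (?w \<circ> transpose x y) y z"
      using bedge_iff[OF pa xyz(1) xin(1,2)] bedge_iff[OF pb xyz(2) xin(2,3)] ab bc b cb ib by simp
    let ?b2 = "transpose y z \<circ> a" and ?b3 = "transpose x z \<circ> a"
    have pb2: "?b2 permutes {1..n}" using pa xin by (intro permutes_compose permutes_swap_id) auto
    have pb3: "?b3 permutes {1..n}" using pa xin by (intro permutes_compose permutes_swap_id) auto
    have c2: "c = transpose x z \<circ> ?b2" using b cb xyz(1-3) by (auto simp: fun_eq_iff transpose_def)
    have c3: "c = transpose x y \<circ> ?b3" using b cb xyz(1-3) by (auto simp: fun_eq_iff transpose_def)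
    have ib2: "inv ?b2 = ?w \<circ> transpose y z" using inv_transp_comp[OF ba] by simp
    have ib3: "inv ?b3 = ?w \<circ> transpose x z" using inv_transp_comp[OF ba] by simp
    have S2: "bedge n a ?b2 \<and> bedge n ?b2 c \<longleftrightarrow> inc ?w y z \<and> inc (?w \<circ> transpose y z) x z"
      unfolding c2 bedge_iff[OF pa xyz(2) xin(2,3)] bedge_iff[OF pb2 xyz(3) xin(1,3)] ib2 by simp
    have S3: "bedge n a ?b3 \<and> bedge n ?b3 c \<longleftrightarrow> inc ?w x z \<and> inc (?w \<circ> transpose x z) x y"
      unfolding c3 bedge_iff[OF pa xyz(3) xin(1,3)] bedge_iff[OF pb3 xyz(1) xin(1,2)] ib3 by simp
    have wne: "?w x \<noteq> ?w y" "?w y \<noteq> ?w z" "?w x \<noteq> ?w z" using xyz(1-3) iw by (auto simp: inj_eq)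
    have ex: "(inc ?w y z \<and> inc (?w \<circ> transpose y z) x z) \<noteq> (inc ?w x z \<and> inc (?w \<circ> transpose x z) x y)"
      using three_arith[OF xyz(1,2,3) wne, of] P1 xyz(1-3) unfolding inc_def by (simp add: transpose_def)
    have ne2: "?b2 \<noteq> b" "?b3 \<noteq> b" "?b2 \<noteq> ?b3"
    proof -
      have A: "transpose y z \<noteq> transpose x y" "transpose x z \<noteq> transpose x y" "transpose y z \<noteq> transpose x z"
        using xyz(1-3) transpose_eq_transpose by metis+
      show "?b2 \<noteq> b" using A(1) cancel_right[OF ba] b by metis
      show "?b3 \<noteq> b" using A(2) cancel_right[OF ba] b by metis
      show "?b2 \<noteq> ?b3" using A(3) cancel_right[OF ba] by metis
    qed
    have cand: "b' = ?b2 \<or> b' = ?b3" if b': "b' \<noteq> b" "bedge n a b'" "bedge n b' c" for b'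
    proof -
      obtain p q r t where mm: "p \<noteq> q" "r \<noteq> t" "b' = transpose p q \<circ> a"
        "transpose p q \<noteq> transpose r t" "transpose r t \<circ> transpose p q = ?t2 \<circ> ?t1"
        using mid_analysis[of n a b' c ?t2 ?t1] b' c ba by blast
      have "supp (transpose r t \<circ> transpose p q) = {p, q, r, t}" by (rule supp_transpose_comp[OF mm(1,2,4)])
      then have "{p, q, r, t} = {x, y, z}" using mm(5) supp12 sx by simp
      then have "p \<in> {x,y,z}" "q \<in> {x,y,z}" by auto
      then have "transpose p q = transpose x y \<or> transpose p q = transpose y z \<or> transpose p q = transpose x z"
        using mm(1) by (auto simp: transpose_commute)
      then show ?thesis using b' b mm(3) by auto
    qed
    show ?thesis
    proof (cases "inc ?w y z \<and> inc (?w \<circ> transpose y z) x z")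
      case True
      show ?thesis
      proof (rule ex1I[of _ ?b2])
        show "?b2 \<noteq> b \<and> bedge n a ?b2 \<and> bedge n ?b2 c" using ne2 S2 True by blast
      next
        fix b' assume "b' \<noteq> b \<and> bedge n a b' \<and> bedge n b' c"
        then show "b' = ?b2" using cand S3 ex True by blast
      qed
    next
      case False
      show ?thesis
      proof (rule ex1I[of _ ?b3])
        show "?b3 \<noteq> b \<and> bedge n a ?b3 \<and> bedge n ?b3 c" using ne2 S3 ex False by blast
      next
        fix b' assume "b' \<noteq> b \<and> bedge n a b' \<and> bedge n b' c"
        then show "b' = ?b3" using cand S2 False by blast
      qed
    qed
  qed
qed


lemma flip_vertex_spec:
  assumes "bedge n a b" "bedge n b c"
  shows "flip_vertex n a b c \<noteq> b \<and> bedge n a (flip_vertex n a b c) \<and> bedge n (flip_vertex n a b c) c"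
  unfolding flip_vertex_def by (rule theI'[OF flip_unique[OF assms]])

lemma flip_vertex_eq:
  assumes "bedge n a b" "bedge n b c" "b' \<noteq> b" "bedge n a b'" "bedge n b' c"
  shows "flip_vertex n a b c = b'"
  unfolding flip_vertex_def by (rule the1_equality[OF flip_unique[OF assms(1,2)]]) (use assms in auto)

lemma flip_vertex_invol:
  assumes "bedge n a b" "bedge n b c"
  shows "flip_vertex n a (flip_vertex n a b c) c = b"
proof -
  have s: "flip_vertex n a b c \<noteq> b" "bedge n a (flip_vertex n a b c)" "bedge n (flip_vertex n a b c) c"
    using flip_vertex_spec[OF assms] by auto
  show ?thesis by (rule flip_vertex_eq[OF s(2,3)]) (use s(1) assms in auto)
qed

lemma pathsD:
  assumes "p \<in> paths n h u v"
  shows "length p = Suc h" "p ! 0 = u" "p ! h = v" "\<And>i. i < h \<Longrightarrow> bedge n (p ! i) (p ! Suc i)"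
proof -
  show l: "length p = Suc h" using assms by (simp add: paths_def)
  have ne: "p \<noteq> []" using l by auto
  show "p ! 0 = u" using assms by (simp add: paths_def hd_conv_nth[OF ne])
  show "p ! h = v" using assms l by (simp add: paths_def last_conv_nth[OF ne])
  show "\<And>i. i < h \<Longrightarrow> bedge n (p ! i) (p ! Suc i)" using assms by (simp add: paths_def)
qed

lemma pathsI:
  assumes "length p = Suc h" "p ! 0 = u" "p ! h = v" "\<And>i. i < h \<Longrightarrow> bedge n (p ! i) (p ! Suc i)"
  shows "p \<in> paths n h u v"
proof -
  have "p \<noteq> []" using assms(1) by auto
  then show ?thesis using assms by (simp add: paths_def hd_conv_nth last_conv_nth)
qed

lemma flip_op_paths:
  assumes p: "p \<in> paths n h u v" and i: "1 \<le> i" "i < h"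
  shows "flip_op n i p \<in> paths n h u v"
proof -
  note P = pathsD[OF p]
  let ?b' = "flip_vertex n (p ! (i - 1)) (p ! i) (p ! Suc i)"
  have e1: "bedge n (p ! (i - 1)) (p ! i)" using P(4)[of "i - 1"] i by simp
  have e2: "bedge n (p ! i) (p ! Suc i)" using P(4)[of i] i by simp
  note S = flip_vertex_spec[OF e1 e2]
  let ?q = "flip_op n i p"
  have q: "?q = p[i := ?b']" by (simp add: flip_op_def)
  have len: "length ?q = Suc h" using q P(1) by simp
  have nth: "?q ! k = (if k = i then ?b' else p ! k)" if "k \<le> h" for k
    using q P(1) that by (simp add: nth_list_update)
  show ?thesis
  proof (rule pathsI[OF len])
    show "?q ! 0 = u" using nth[of 0] i P(2) by simp
    show "?q ! h = v" using nth[of h] i P(3) by simp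
    fix k assume k: "k < h"
    show "bedge n (?q ! k) (?q ! Suc k)"
    proof (cases "k = i")
      case True then show ?thesis using nth k S by simp
    next
      case False
      show ?thesis
      proof (cases "Suc k = i")
        case True
        then have "k = i - 1" by simp
        then show ?thesis using nth k S True by simp
      next
        case False
        then show ?thesis using nth k \<open>k \<noteq> i\<close> P(4)[OF k] by simp
      qed
    qed
  qed
qed

lemma flip_op_invol:
  assumes p: "p \<in> paths n h u v" and i: "1 \<le> i" "i < h"
  shows "flip_op n i (flip_op n i p) = p"
proof -
  note P = pathsD[OF p]
  have e1: "bedge n (p ! (i - 1)) (p ! i)" using P(4)[of "i - 1"] i by simp
  have e2: "bedge n (p ! i) (p ! Suc i)" using P(4)[of i] i by simp
  let ?b' = "flip_vertex n (p ! (i - 1)) (p ! i) (p ! Suc i)"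
  have q: "flip_op n i p = p[i := ?b']" by (simp add: flip_op_def)
  have a1: "(p[i := ?b']) ! (i - 1) = p ! (i - 1)" using i by simp
  have a2: "(p[i := ?b']) ! Suc i = p ! Suc i" by simp
  have a3: "(p[i := ?b']) ! i = ?b'" using i P(1) by simp
  show ?thesis unfolding q flip_op_def a1 a2 a3 flip_vertex_invol[OF e1 e2] by simp
qed

lemma comp_inv_cancel:
  assumes "bij x" "y = f \<circ> x" shows "y \<circ> inv x = f"
proof -
  have "x \<circ> inv x = id" using surj_iff bij_is_surj[OF assms(1)] by blast
  then show ?thesis using assms(2) by (simp add: comp_assoc)
qed

lemma supp_two_step:
  assumes "bedge n a b" "bedge n b c"
  shows "supp (b \<circ> inv a) \<union> supp (c \<circ> inv b) = supp (c \<circ> inv a)"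
proof -
  obtain p q r t where m: "p \<noteq> q" "r \<noteq> t" "b = transpose p q \<circ> a" "c = transpose r t \<circ> b"
    "transpose p q \<noteq> transpose r t"
    using mid_vertex[OF assms] by blast
  have ba: "bij a" using bedge_perm[OF assms(1)] permutes_bij by blast
  have bb: "bij b" using bedge_perm[OF assms(1)] permutes_bij by blast
  have 1: "b \<circ> inv a = transpose p q" by (rule comp_inv_cancel[OF ba m(3)])
  have 2: "c \<circ> inv b = transpose r t" by (rule comp_inv_cancel[OF bb m(4)])
  have 3: "c \<circ> inv a = transpose r t \<circ> transpose p q"
    by (rule comp_inv_cancel[OF ba]) (simp add: m(3,4) comp_assoc)
  show ?thesis unfolding 1 2 3 supp_transpose_comp[OF m(1,2,5)] supp_transpose[OF m(1)]
    supp_transpose[OF m(2)] by auto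
qed

lemma labels_nth:
  "k < length p - 1 \<Longrightarrow> labels p ! k = p ! Suc k \<circ> inv (p ! k)"
  by (simp add: labels_def)

lemma length_labels: "length (labels p) = length p - 1"
  by (simp add: labels_def)

lemma Gverts_nth:
  assumes "length p = Suc h"
  shows "Gverts p = (\<Union>k\<in>{..<h}. supp (p ! Suc k \<circ> inv (p ! k)))"
proof -
  have S: "set (labels p) = (\<lambda>k. p ! Suc k \<circ> inv (p ! k)) ` {..<h}"
    using assms by (auto simp: labels_def)
  show ?thesis
  proof (intro equalityI subsetI)
    fix z assume "z \<in> Gverts p"
    then obtain t where "t \<in> set (labels p)" "t z \<noteq> z" unfolding Gverts_def by blast
    then show "z \<in> (\<Union>k\<in>{..<h}. supp (p ! Suc k \<circ> inv (p ! k)))" unfolding S supp_def by blast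
  next
    fix z assume "z \<in> (\<Union>k\<in>{..<h}. supp (p ! Suc k \<circ> inv (p ! k)))"
    then obtain k where "k < h" "(p ! Suc k \<circ> inv (p ! k)) z \<noteq> z" unfolding supp_def by blast
    then show "z \<in> Gverts p" unfolding Gverts_def S by blast
  qed
qed

lemma flip_op_Gverts:
  assumes p: "p \<in> paths n h u v" and i: "1 \<le> i" "i < h"
  shows "Gverts (flip_op n i p) = Gverts p"
proof -
  note P = pathsD[OF p]
  let ?b' = "flip_vertex n (p ! (i - 1)) (p ! i) (p ! Suc i)"
  let ?q = "flip_op n i p"
  have e1: "bedge n (p ! (i - 1)) (p ! i)" using P(4)[of "i - 1"] i by simp
  have e2: "bedge n (p ! i) (p ! Suc i)" using P(4)[of i] i by simp
  note S = flip_vertex_spec[OF e1 e2]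
  have q: "?q = p[i := ?b']" by (simp add: flip_op_def)
  have len: "length ?q = Suc h" using q P(1) by simp
  have nth: "?q ! k = (if k = i then ?b' else p ! k)" if "k \<le> h" for k
    using q P(1) that by (simp add: nth_list_update)
  have U1: "supp (p ! i \<circ> inv (p ! (i - 1))) \<union> supp (p ! Suc i \<circ> inv (p ! i)) = supp (p ! Suc i \<circ> inv (p ! (i - 1)))"
    by (rule supp_two_step[OF e1 e2])
  have U2: "supp (?b' \<circ> inv (p ! (i - 1))) \<union> supp (p ! Suc i \<circ> inv ?b') = supp (p ! Suc i \<circ> inv (p ! (i - 1)))"
    using S by (intro supp_two_step) auto
  let ?L = "\<lambda>r k. supp (r ! Suc k \<circ> inv (r ! k))"
  have same: "?L ?q k = ?L p k" if "k < h" "k \<noteq> i" "k \<noteq> i - 1" for k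
  proof -
    have "Suc k \<noteq> i" using that i by auto
    then show ?thesis using nth[of k] nth[of "Suc k"] that by simp
  qed
  have si: "Suc (i - 1) = i" using i by simp
  have n0: "?q ! i = ?b'" using nth[of i] i by simp
  have "i - 1 \<noteq> i" using i by simp
  then have n1: "?q ! (i - 1) = p ! (i - 1)" using nth[of "i - 1"] i by simp
  have n2: "?q ! Suc i = p ! Suc i" using nth[of "Suc i"] i by simp
  have qi1: "?L ?q (i - 1) = supp (?b' \<circ> inv (p ! (i - 1)))" unfolding si n0 n1 ..
  have qi: "?L ?q i = supp (p ! Suc i \<circ> inv ?b')" unfolding n0 n2 ..
  have UU: "?L ?q (i - 1) \<union> ?L ?q i = ?L p (i - 1) \<union> ?L p i"
    unfolding qi1 qi unfolding si U1 U2 ..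
  have "(\<Union>k\<in>{..<h}. ?L ?q k) = (\<Union>k\<in>{..<h}. ?L p k)"
  proof (intro equalityI subsetI)
    fix z assume "z \<in> (\<Union>k\<in>{..<h}. ?L ?q k)"
    then obtain k where k: "k < h" "z \<in> ?L ?q k" by auto
    show "z \<in> (\<Union>k\<in>{..<h}. ?L p k)"
    proof (cases "k = i \<or> k = i - 1")
      case True
      then have "z \<in> ?L p (i - 1) \<union> ?L p i" using k UU by blast
      moreover have "i - 1 < h" "i < h" using i by auto
      ultimately show ?thesis by blast
    next
      case False
      then have "z \<in> ?L p k" using k same by simp
      then show ?thesis using k by blast
    qed
  next
    fix z assume "z \<in> (\<Union>k\<in>{..<h}. ?L p k)"
    then obtain k where k: "k < h" "z \<in> ?L p k" by auto
    show "z \<in> (\<Union>k\<in>{..<h}. ?L ?q k)"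
    proof (cases "k = i \<or> k = i - 1")
      case True
      then have "z \<in> ?L ?q (i - 1) \<union> ?L ?q i" using k UU by blast
      moreover have "i - 1 < h" "i < h" using i by auto
      ultimately show ?thesis by blast
    next
      case False
      then have "z \<in> ?L ?q k" using k same by simp
      then show ?thesis using k by blast
    qed
  qed
  then show ?thesis unfolding Gverts_nth[OF len] Gverts_nth[OF P(1)] .
qed

definition Cset :: "nat set \<Rightarrow> (nat \<Rightarrow> nat) \<Rightarrow> (nat \<Rightarrow> nat) set" where
  "Cset E u = {\<sigma> \<circ> u | \<sigma>. \<sigma> permutes E}"

lemma path_step_transp:
  assumes p: "p \<in> paths n h u v" and k: "k < h"
  shows "\<exists>\<alpha> \<beta>. \<alpha> \<noteq> \<beta> \<and> p ! Suc k = transpose \<alpha> \<beta> \<circ> p ! k \<and> p ! Suc k \<circ> inv (p ! k) = transpose \<alpha> \<beta>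
     \<and> \<alpha> \<in> Gverts p \<and> \<beta> \<in> Gverts p"
proof -
  note P = pathsD[OF p]
  have e: "bedge n (p ! k) (p ! Suc k)" using P(4)[OF k] .
  obtain \<alpha> \<beta> where ab: "\<alpha> \<noteq> \<beta>" "p ! Suc k = transpose \<alpha> \<beta> \<circ> p ! k" using bedgeD[OF e] by blast
  have bk: "bij (p ! k)" using bedge_perm[OF e] permutes_bij by blast
  have l: "p ! Suc k \<circ> inv (p ! k) = transpose \<alpha> \<beta>" by (rule comp_inv_cancel[OF bk ab(2)])
  have "supp (p ! Suc k \<circ> inv (p ! k)) \<subseteq> Gverts p" unfolding Gverts_nth[OF P(1)] using k by blast
  then have "supp (transpose \<alpha> \<beta>) \<subseteq> Gverts p" unfolding l .
  then have "\<alpha> \<in> Gverts p" "\<beta> \<in> Gverts p" using supp_transpose[OF ab(1)] by auto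
  then show ?thesis using ab l by blast
qed

lemma path_in_Cset:
  assumes p: "p \<in> paths n h u v" and E: "Gverts p \<subseteq> E" and k: "k \<le> h"
  shows "p ! k \<in> Cset E u"
  using k
proof (induction k)
  case 0
  have "p ! 0 = id \<circ> u" using pathsD(2)[OF p] by simp
  then show ?case unfolding Cset_def using permutes_id by blast
next
  case (Suc k)
  then obtain \<sigma> where s: "\<sigma> permutes E" "p ! k = \<sigma> \<circ> u" unfolding Cset_def by auto
  obtain \<alpha> \<beta> where ab: "\<alpha> \<noteq> \<beta>" "p ! Suc k = transpose \<alpha> \<beta> \<circ> p ! k" "\<alpha> \<in> Gverts p" "\<beta> \<in> Gverts p"
    using path_step_transp[OF p, of k] Suc.prems by auto
  have "transpose \<alpha> \<beta> \<circ> \<sigma> permutes E" using E ab s by (intro permutes_compose permutes_swap_id) auto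
  moreover have "p ! Suc k = (transpose \<alpha> \<beta> \<circ> \<sigma>) \<circ> u" using ab s by (simp add: comp_assoc)
  ultimately show ?case unfolding Cset_def by blast
qed

definition fstep where
  "fstep n h u v = flip_steps n h u v \<union> (flip_steps n h u v)\<inverse>"

lemma flipclass_inv:
  assumes p0: "p0 \<in> paths n h u v" and q: "(p0, q) \<in> (fstep n h u v)\<^sup>*"
  shows "q \<in> paths n h u v \<and> Gverts q = Gverts p0"
  using q
proof (induction rule: rtrancl_induct)
  case base then show ?case using p0 by simp
next
  case (step y z)
  show ?case
  proof (cases "(y, z) \<in> flip_steps n h u v")
    case True
    then obtain i where i: "1 \<le> i" "i < h" "z = flip_op n i y" "y \<in> paths n h u v"
      by (auto simp: flip_steps_def)
    then show ?thesis using flip_op_paths[OF i(4) i(1,2)] flip_op_Gverts[OF i(4) i(1,2)] step.IH by simp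
  next
    case False
    then have "(z, y) \<in> flip_steps n h u v" using step.hyps(2) by (auto simp: fstep_def)
    then obtain i where i: "1 \<le> i" "i < h" "y = flip_op n i z" "z \<in> paths n h u v"
      by (auto simp: flip_steps_def)
    then show ?thesis using flip_op_Gverts[OF i(4) i(1,2)] step.IH by simp
  qed
qed


definition rk :: "nat set \<Rightarrow> nat \<Rightarrow> nat" where
  "rk S a = Suc (card {b\<in>S. b < a})"

definition ur :: "nat set \<Rightarrow> nat \<Rightarrow> nat" where
  "ur S = the_inv_into S (rk S)"

lemma rk_mono:
  assumes "finite S" "a \<in> S" "a' \<in> S" "a < a'"
  shows "rk S a < rk S a'"
proof -
  have "{b\<in>S. b < a} \<subset> {b\<in>S. b < a'}" using assms by auto
  then have "card {b\<in>S. b < a} < card {b\<in>S. b < a'}" using assms(1) by (intro psubset_card_mono) auto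
  then show ?thesis by (simp add: rk_def)
qed

lemma rk_less_iff:
  assumes "finite S" "a \<in> S" "a' \<in> S"
  shows "rk S a < rk S a' \<longleftrightarrow> a < a'"
  using rk_mono[OF assms] rk_mono[OF assms(1,3,2)] by (cases a a' rule: linorder_cases) auto

lemma rk_inj: "finite S \<Longrightarrow> inj_on (rk S) S"
  by (rule inj_onI) (metis rk_less_iff less_irrefl linorder_neqE_nat)

lemma rk_range:
  assumes "finite S" "a \<in> S" shows "rk S a \<in> {1..card S}"
proof -
  have "{b\<in>S. b < a} \<subset> S" using assms by auto
  then have "card {b\<in>S. b < a} < card S" by (rule psubset_card_mono[OF assms(1)])
  then show ?thesis by (simp add: rk_def)
qed

lemma rk_bij: assumes "finite S" shows "bij_betw (rk S) S {1..card S}"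
proof -
  have "rk S ` S \<subseteq> {1..card S}" using rk_range[OF assms] by auto
  moreover have "card (rk S ` S) = card {1..card S}" using card_image[OF rk_inj[OF assms]] by simp
  ultimately have "rk S ` S = {1..card S}" by (intro card_subset_eq) auto
  then show ?thesis using rk_inj[OF assms] by (simp add: bij_betw_def)
qed

lemma ur_bij: "finite S \<Longrightarrow> bij_betw (ur S) {1..card S} S"
  unfolding ur_def by (rule bij_betw_the_inv_into[OF rk_bij])

lemma ur_in: "finite S \<Longrightarrow> j \<in> {1..card S} \<Longrightarrow> ur S j \<in> S"
  using ur_bij bij_betwE by blast

lemma rk_ur: "finite S \<Longrightarrow> j \<in> {1..card S} \<Longrightarrow> rk S (ur S j) = j"
  unfolding ur_def by (rule f_the_inv_into_f_bij_betw[OF rk_bij]) auto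

lemma ur_rk: "finite S \<Longrightarrow> a \<in> S \<Longrightarrow> ur S (rk S a) = a"
  unfolding ur_def by (rule the_inv_into_f_f[OF rk_inj])

definition phi :: "nat set \<Rightarrow> (nat \<Rightarrow> nat) \<Rightarrow> (nat \<Rightarrow> nat) \<Rightarrow> (nat \<Rightarrow> nat)" where
  "phi E u x = (\<lambda>j. if j \<in> {1..card E} then rk E (x (ur (u -` E) j)) else j)"

definition psi :: "nat set \<Rightarrow> (nat \<Rightarrow> nat) \<Rightarrow> (nat \<Rightarrow> nat)" where
  "psi E t = (\<lambda>j. if j \<in> {1..card E} then rk E (t (ur E j)) else j)"

locale setting =
  fixes E :: "nat set" and u :: "nat \<Rightarrow> nat"
  assumes finE: "finite E" and bu: "bij_betw u (u -` E) E"
begin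

abbreviation "P \<equiv> u -` E"
abbreviation "e \<equiv> card E"

lemma finP: "finite P" using bu finE bij_betw_finite by blast
lemma cardP: "card P = e" using bu bij_betw_same_card by blast

lemma C_bij: assumes "x \<in> Cset E u" shows "bij_betw x P E"
proof -
  obtain \<sigma> where s: "\<sigma> permutes E" "x = \<sigma> \<circ> u" using assms by (auto simp: Cset_def)
  show ?thesis unfolding s(2) by (rule bij_betw_trans[OF bu permutes_imp_bij[OF s(1)]])
qed

lemma C_out: assumes "x \<in> Cset E u" "p \<notin> P" shows "x p = u p"
proof -
  obtain \<sigma> where s: "\<sigma> permutes E" "x = \<sigma> \<circ> u" using assms by (auto simp: Cset_def)
  have "u p \<notin> E" using assms(2) by simp
  then show ?thesis using s permutes_not_in by fastforce
qed

lemma xP: "x \<in> Cset E u \<Longrightarrow> p \<in> P \<Longrightarrow> x p \<in> E"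
  using C_bij bij_betwE by blast

lemma phi_permutes:
  assumes x: "x \<in> Cset E u" and m: "e \<le> m"
  shows "phi E u x permutes {1..m}"
proof -
  have b: "bij_betw (rk E \<circ> (x \<circ> ur P)) {1..e} {1..e}"
    using bij_betw_trans[OF bij_betw_trans[OF ur_bij[OF finP, unfolded cardP] C_bij[OF x]] rk_bij[OF finE]] .
  have "bij_betw (phi E u x) {1..e} {1..e}"
    using b by (rule bij_betw_cong[THEN iffD1, rotated]) (simp add: phi_def)
  then have "phi E u x permutes {1..e}" by (rule bij_imp_permutes) (simp add: phi_def del: atLeastAtMost_iff)
  then show ?thesis by (rule permutes_subset) (use m in auto)
qed

lemma phi_inj: "inj_on (phi E u) (Cset E u)"
proof (rule inj_onI)
  fix x y assume x: "x \<in> Cset E u" and y: "y \<in> Cset E u" and e: "phi E u x = phi E u y"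
  show "x = y"
  proof
    fix p
    show "x p = y p"
    proof (cases "p \<in> P")
      case True
      let ?j = "rk P p"
      have j: "?j \<in> {1..e}" using rk_range[OF finP True] cardP by simp
      have "phi E u x ?j = phi E u y ?j" using e by simp
      then have "rk E (x (ur P ?j)) = rk E (y (ur P ?j))" using j by (simp add: phi_def)
      then have "rk E (x p) = rk E (y p)" using ur_rk[OF finP True] by simp
      then show ?thesis using rk_inj[OF finE] xP[OF x True] xP[OF y True] by (meson inj_onD)
    next
      case False
      then show ?thesis using C_out[OF x False] C_out[OF y False] by simp
    qed
  qed
qed

lemma rk_transpose:
  assumes "\<alpha> \<in> E" "\<beta> \<in> E" "c \<in> E"
  shows "rk E (transpose \<alpha> \<beta> c) = transpose (rk E \<alpha>) (rk E \<beta>) (rk E c)"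
proof -
  have i: "rk E c = rk E \<alpha> \<longleftrightarrow> c = \<alpha>" "rk E c = rk E \<beta> \<longleftrightarrow> c = \<beta>"
    using inj_onD[OF rk_inj[OF finE]] assms by blast+
  show ?thesis using i by (auto simp: transpose_def)
qed

lemma psi_transpose:
  assumes "\<alpha> \<in> E" "\<beta> \<in> E"
  shows "psi E (transpose \<alpha> \<beta>) = transpose (rk E \<alpha>) (rk E \<beta>)"
proof
  fix j
  show "psi E (transpose \<alpha> \<beta>) j = transpose (rk E \<alpha>) (rk E \<beta>) j"
  proof (cases "j \<in> {1..e}")
    case True
    have c: "ur E j \<in> E" using ur_in[OF finE True] .
    show ?thesis using True rk_transpose[OF assms c] rk_ur[OF finE True] by (simp add: psi_def)
  next
    case False
    have "rk E \<alpha> \<in> {1..e}" "rk E \<beta> \<in> {1..e}" using rk_range[OF finE] assms by auto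
    then have "j \<noteq> rk E \<alpha>" "j \<noteq> rk E \<beta>" using False by auto
    then show ?thesis using False by (simp add: psi_def del: atLeastAtMost_iff)
  qed
qed

lemma C_transpose:
  assumes x: "x \<in> Cset E u" and ab: "\<alpha> \<in> E" "\<beta> \<in> E"
  shows "transpose \<alpha> \<beta> \<circ> x \<in> Cset E u"
proof -
  obtain \<sigma> where s: "\<sigma> permutes E" "x = \<sigma> \<circ> u" using assms by (auto simp: Cset_def)
  have "transpose \<alpha> \<beta> \<circ> \<sigma> permutes E" using s ab by (intro permutes_compose permutes_swap_id) auto
  then show ?thesis unfolding Cset_def s(2) by (auto simp: comp_assoc intro!: exI[of _ "transpose \<alpha> \<beta> \<circ> \<sigma>"])
qed

lemma phi_transpose:
  assumes x: "x \<in> Cset E u" and ab: "\<alpha> \<in> E" "\<beta> \<in> E"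
  shows "phi E u (transpose \<alpha> \<beta> \<circ> x) = transpose (rk E \<alpha>) (rk E \<beta>) \<circ> phi E u x"
proof
  fix j
  show "phi E u (transpose \<alpha> \<beta> \<circ> x) j = (transpose (rk E \<alpha>) (rk E \<beta>) \<circ> phi E u x) j"
  proof (cases "j \<in> {1..e}")
    case True
    have "ur P j \<in> P" using ur_in[OF finP] True cardP by simp
    then have c: "x (ur P j) \<in> E" using xP[OF x] by blast
    show ?thesis using True rk_transpose[OF ab c] by (simp add: phi_def)
  next
    case False
    have "rk E \<alpha> \<in> {1..e}" "rk E \<beta> \<in> {1..e}" using rk_range[OF finE] ab by auto
    then have "j \<noteq> rk E \<alpha>" "j \<noteq> rk E \<beta>" using False by auto
    then show ?thesis using False by (simp add: phi_def del: atLeastAtMost_iff)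
  qed
qed

lemma inv_phi:
  assumes x: "x \<in> Cset E u" and bx: "bij x" and m: "e \<le> m" and a: "a \<in> E"
  shows "inv (phi E u x) (rk E a) = rk P (inv x a)"
proof -
  have xa: "x (inv x a) = a" using bx by (simp add: bij_is_surj surj_f_inv_f)
  have pP: "inv x a \<in> P"
  proof (rule ccontr)
    assume "inv x a \<notin> P"
    then have "x (inv x a) = u (inv x a)" by (rule C_out[OF x])
    then have "u (inv x a) \<in> E" using xa a by simp
    then show False using \<open>inv x a \<notin> P\<close> by simp
  qed
  have j: "rk P (inv x a) \<in> {1..e}" using rk_range[OF finP pP] cardP by simp
  have "phi E u x (rk P (inv x a)) = rk E a"
    using j ur_rk[OF finP pP] xa by (simp add: phi_def)
  moreover have "bij (phi E u x)" using phi_permutes[OF x m] permutes_bij by blast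
  ultimately show ?thesis by (metis bij_inv_eq_iff)
qed

lemma inc_phi:
  assumes x: "x \<in> Cset E u" and bx: "bij x" and m: "e \<le> m" and a: "\<alpha> \<in> E" "\<beta> \<in> E"
  shows "inc (inv (phi E u x)) (rk E \<alpha>) (rk E \<beta>) \<longleftrightarrow> inc (inv x) \<alpha> \<beta>"
proof -
  have pa: "inv x \<alpha> \<in> P" "inv x \<beta> \<in> P"
    using a bx C_out[OF x] by (metis bij_inv_eq_iff vimageI2)+
  show ?thesis unfolding inc_def inv_phi[OF x bx m a(1)] inv_phi[OF x bx m a(2)]
    rk_less_iff[OF finE a] rk_less_iff[OF finP pa] ..
qed

lemma bedge_phi:
  assumes x: "x \<in> Cset E u" and m: "e \<le> m" and ed: "bedge n x y" and s: "supp (y \<circ> inv x) \<subseteq> E"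
  shows "bedge m (phi E u x) (phi E u y)"
proof -
  obtain p q where pq: "p \<noteq> q" "y = transpose p q \<circ> x" "inc (inv x) p q"
    using bedgeD[OF ed] by blast
  have bx: "bij x" using bedge_perm[OF ed] permutes_bij by blast
  have "y \<circ> inv x = transpose p q" by (rule comp_inv_cancel[OF bx pq(2)])
  then have pqE: "p \<in> E" "q \<in> E" using s supp_transpose[OF pq(1)] by auto
  have py: "phi E u y = transpose (rk E p) (rk E q) \<circ> phi E u x"
    unfolding pq(2) by (rule phi_transpose[OF x pqE])
  have ne: "rk E p \<noteq> rk E q" using pq(1) inj_onD[OF rk_inj[OF finE]] pqE by blast
  have rin: "rk E p \<in> {1..m}" "rk E q \<in> {1..m}" using rk_range[OF finE] pqE m by fastforce+
  show ?thesis unfolding py bedge_iff[OF phi_permutes[OF x m] ne rin] inc_phi[OF x bx m pqE] by (rule pq(3))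
qed

end


locale fsetting = setting E u for E u +
  fixes n h v p0 m
  assumes p0: "p0 \<in> paths n h u v" and Edef: "E = Gverts p0" and me: "card E \<le> m"
begin

abbreviation "FF \<equiv> {q. (p0, q) \<in> (fstep n h u v)\<^sup>*}"
abbreviation "ph \<equiv> phi E u"

lemma inF: assumes "q \<in> FF" shows "q \<in> paths n h u v \<and> Gverts q = E"
proof -
  have "(p0, q) \<in> (fstep n h u v)\<^sup>*" using assms by simp
  from flipclass_inv[OF p0 this] show ?thesis using Edef by simp
qed

lemma vert_C:
  assumes q: "q \<in> paths n h u v" "Gverts q = E"
  shows "set q \<subseteq> Cset E u"
proof
  fix x assume "x \<in> set q"
  then obtain k where k: "k < length q" "x = q ! k" by (auto simp: in_set_conv_nth)
  then have "k \<le> h" using pathsD(1)[OF q(1)] by simp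
  then show "x \<in> Cset E u" using path_in_Cset[OF q(1)] q(2) k by simp
qed

lemma PT:
  assumes q: "q \<in> paths n h u v" "Gverts q = E"
  shows "map ph q \<in> paths m h (ph u) (ph v)"
proof -
  note P = pathsD[OF q(1)]
  show ?thesis
  proof (rule pathsI)
    show "length (map ph q) = Suc h" using P by simp
    show "map ph q ! 0 = ph u" using P by simp
    show "map ph q ! h = ph v" using P by simp
    fix k assume k: "k < h"
    have xk: "q ! k \<in> Cset E u" using vert_C[OF q] P(1) k by (simp add: subset_iff)
    have s: "supp (q ! Suc k \<circ> inv (q ! k)) \<subseteq> E" using q(2) unfolding Gverts_nth[OF P(1)] using k by blast
    have "bedge m (ph (q ! k)) (ph (q ! Suc k))" by (rule bedge_phi[OF xk me P(4)[OF k] s])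
    then show "bedge m (map ph q ! k) (map ph q ! Suc k)" using k P(1) by simp
  qed
qed

lemma FC:
  assumes q: "q \<in> paths n h u v" "Gverts q = E" and i: "1 \<le> i" "i < h"
  shows "map ph (flip_op n i q) = flip_op m i (map ph q)"
proof -
  note P = pathsD[OF q(1)]
  let ?q' = "flip_op n i q"
  let ?b' = "flip_vertex n (q ! (i - 1)) (q ! i) (q ! Suc i)"
  have q'p: "?q' \<in> paths n h u v" by (rule flip_op_paths[OF q(1) i])
  have q'G: "Gverts ?q' = E" using flip_op_Gverts[OF q(1) i] q(2) by simp
  have e1: "bedge n (q ! (i - 1)) (q ! i)" using P(4)[of "i - 1"] i by simp
  have e2: "bedge n (q ! i) (q ! Suc i)" using P(4)[of i] i by simp
  note S = flip_vertex_spec[OF e1 e2]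
  have qq: "?q' = q[i := ?b']" by (simp add: flip_op_def)
  have q'i: "?q' ! i = ?b'" using qq i P(1) by simp
  have q'i1: "?q' ! (i - 1) = q ! (i - 1)" using qq i by simp
  have q'i2: "?q' ! Suc i = q ! Suc i" using qq by simp
  have si: "Suc (i - 1) = i" using i by simp
  have PQ: "map ph q \<in> paths m h (ph u) (ph v)" by (rule PT[OF q])
  have lq': "length ?q' = Suc h" using pathsD(1)[OF q'p] .
  have PQ': "map ph ?q' \<in> paths m h (ph u) (ph v)" by (rule PT[OF q'p q'G])
  have m1: "bedge m (ph (q ! (i - 1))) (ph (q ! i))"
    using pathsD(4)[OF PQ, of "i - 1"] i P(1) si by simp
  have m2: "bedge m (ph (q ! i)) (ph (q ! Suc i))"
    using pathsD(4)[OF PQ, of i] i P(1) by simp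
  have m3: "bedge m (ph (q ! (i - 1))) (ph ?b')"
    using pathsD(4)[OF PQ', of "i - 1"] i lq' si q'i q'i1 by simp
  have m4: "bedge m (ph ?b') (ph (q ! Suc i))"
    using pathsD(4)[OF PQ', of i] i lq' q'i q'i2 by simp
  have "?q' ! i \<in> set ?q'" using i lq' by (intro nth_mem) simp
  then have "?q' ! i \<in> Cset E u" using vert_C[OF q'p q'G] by blast
  then have bC: "?b' \<in> Cset E u" unfolding q'i .
  have iC: "q ! i \<in> Cset E u" using vert_C[OF q] i P(1) by (simp add: subset_iff)
  have "?b' \<noteq> q ! i" using S by blast
  then have ne: "ph ?b' \<noteq> ph (q ! i)" using inj_on_eq_iff[OF phi_inj bC iC] by simp
  have fv: "flip_vertex m (ph (q ! (i - 1))) (ph (q ! i)) (ph (q ! Suc i)) = ph ?b'"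
    by (rule flip_vertex_eq[OF m1 m2 ne m3 m4])
  have "map ph ?q' = (map ph q)[i := ph ?b']" unfolding qq by (simp add: map_update)
  also have "\<dots> = flip_op m i (map ph q)"
    unfolding flip_op_def using i P(1) fv by simp
  finally show ?thesis .
qed

end


lemma tpair_transpose:
  assumes "\<alpha> < \<beta>" shows "tpair (transpose \<alpha> \<beta>) = (\<alpha>, \<beta>)"
proof -
  have "{a. transpose \<alpha> \<beta> a \<noteq> a} = {\<alpha>, \<beta>}" using assms by (auto simp: transpose_def)
  then show ?thesis using assms by (simp add: tpair_def)
qed

context fsetting
begin

lemma LT:
  assumes q: "q \<in> paths n h u v" "Gverts q = E" and t: "t \<in> set (labels q)"
  shows "\<exists>\<alpha> \<beta>. \<alpha> < \<beta> \<and> \<alpha> \<in> E \<and> \<beta> \<in> E \<and> t = transpose \<alpha> \<beta>"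
proof -
  note P = pathsD[OF q(1)]
  obtain k where k: "k < h" "t = labels q ! k" using t P(1) by (auto simp: in_set_conv_nth length_labels)
  have t': "t = q ! Suc k \<circ> inv (q ! k)" using k labels_nth[of k q] P(1) by simp
  obtain \<alpha> \<beta> where ab: "\<alpha> \<noteq> \<beta>" "q ! Suc k \<circ> inv (q ! k) = transpose \<alpha> \<beta>" "\<alpha> \<in> Gverts q" "\<beta> \<in> Gverts q"
    using path_step_transp[OF q(1) k(1)] by blast
  show ?thesis
  proof (cases "\<alpha> < \<beta>")
    case True then show ?thesis using ab t' q(2) by blast
  next
    case False
    then have "\<beta> < \<alpha>" using ab(1) by simp
    then show ?thesis using ab t' q(2) transpose_commute by metis
  qed
qed

lemma LAB:
  assumes q: "q \<in> paths n h u v" "Gverts q = E"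
  shows "labels (map ph q) = map (psi E) (labels q)"
proof (rule nth_equalityI)
  note P = pathsD[OF q(1)]
  show "length (labels (map ph q)) = length (map (psi E) (labels q))" by (simp add: length_labels)
  fix k assume "k < length (labels (map ph q))"
  then have k: "k < h" using P(1) by (simp add: length_labels)
  obtain \<alpha> \<beta> where ab: "\<alpha> \<noteq> \<beta>" "q ! Suc k = transpose \<alpha> \<beta> \<circ> q ! k" "q ! Suc k \<circ> inv (q ! k) = transpose \<alpha> \<beta>"
    "\<alpha> \<in> Gverts q" "\<beta> \<in> Gverts q"
    using path_step_transp[OF q(1) k] by blast
  have abE: "\<alpha> \<in> E" "\<beta> \<in> E" using ab q(2) by auto
  have xk: "q ! k \<in> Cset E u" using vert_C[OF q] P(1) k by (simp add: subset_iff)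
  have bx: "bij (ph (q ! k))" using phi_permutes[OF xk me] permutes_bij by blast
  have e: "ph (q ! Suc k) = transpose (rk E \<alpha>) (rk E \<beta>) \<circ> ph (q ! k)"
    unfolding ab(2) by (rule phi_transpose[OF xk abE])
  have "labels (map ph q) ! k = ph (q ! Suc k) \<circ> inv (ph (q ! k))"
    using k P(1) by (simp add: labels_nth)
  also have "\<dots> = transpose (rk E \<alpha>) (rk E \<beta>)" by (rule comp_inv_cancel[OF bx e])
  also have "\<dots> = psi E (transpose \<alpha> \<beta>)" using psi_transpose[OF abE] by simp
  also have "\<dots> = map (psi E) (labels q) ! k" using k P(1) ab(3) by (simp add: labels_nth length_labels)
  finally show "labels (map ph q) ! k = map (psi E) (labels q) ! k" .
qed

lemma closure_sub:
  assumes "q \<in> FF"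
  shows "(map ph p0, map ph q) \<in> (fstep m h (ph u) (ph v))\<^sup>*"
proof -
  have "(p0, q) \<in> (fstep n h u v)\<^sup>*" using assms by simp
  then show ?thesis
  proof (induction rule: rtrancl_induct)
    case base then show ?case by simp
  next
    case (step y z)
    have yi: "y \<in> paths n h u v" "Gverts y = E" using flipclass_inv[OF p0 step.hyps(1)] Edef by auto
    show ?case
    proof (cases "(y, z) \<in> flip_steps n h u v")
      case True
      then obtain i where i: "1 \<le> i" "i < h" "z = flip_op n i y" by (auto simp: flip_steps_def)
      have "map ph z = flip_op m i (map ph y)" using FC[OF yi i(1,2)] i(3) by simp
      then have "(map ph y, map ph z) \<in> flip_steps m h (ph u) (ph v)"
        using PT[OF yi] i unfolding flip_steps_def by blast
      then have "(map ph y, map ph z) \<in> fstep m h (ph u) (ph v)" by (simp add: fstep_def)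
      then show ?thesis using step.IH by (rule rtrancl_into_rtrancl[rotated])
    next
      case False
      then have "(z, y) \<in> flip_steps n h u v" using step.hyps(2) by (auto simp: fstep_def)
      then obtain i where i: "1 \<le> i" "i < h" "y = flip_op n i z" "z \<in> paths n h u v"
        by (auto simp: flip_steps_def)
      have zG: "Gverts z = E" using flip_op_Gverts[OF i(4) i(1,2)] i(3) yi(2) by simp
      have "map ph y = flip_op m i (map ph z)" using FC[OF i(4) zG i(1,2)] i(3) by simp
      then have "(map ph z, map ph y) \<in> flip_steps m h (ph u) (ph v)"
        using PT[OF i(4) zG] i unfolding flip_steps_def by blast
      then have "(map ph y, map ph z) \<in> fstep m h (ph u) (ph v)" by (simp add: fstep_def)
      then show ?thesis using step.IH by (rule rtrancl_into_rtrancl[rotated])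
    qed
  qed
qed

lemma closure_sup:
  assumes "(map ph p0, q') \<in> (fstep m h (ph u) (ph v))\<^sup>*"
  shows "\<exists>q\<in>FF. q' = map ph q"
  using assms
proof (induction rule: rtrancl_induct)
  case base then show ?case by blast
next
  case (step y' z')
  obtain y where y: "y \<in> FF" "y' = map ph y" using step.IH by blast
  have yi: "y \<in> paths n h u v" "Gverts y = E" using inF[OF y(1)] by auto
  have key: "flip_op n i y \<in> FF \<and> flip_op m i y' = map ph (flip_op n i y)" if i: "1 \<le> i" "i < h" for i
  proof
    have "(y, flip_op n i y) \<in> flip_steps n h u v" using yi(1) i unfolding flip_steps_def by blast
    then have "(y, flip_op n i y) \<in> fstep n h u v" by (simp add: fstep_def)
    then show "flip_op n i y \<in> FF" using y(1) by (simp add: rtrancl_into_rtrancl)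
    show "flip_op m i y' = map ph (flip_op n i y)" using FC[OF yi i] y(2) by simp
  qed
  show ?case
  proof (cases "(y', z') \<in> flip_steps m h (ph u) (ph v)")
    case True
    then obtain i where i: "1 \<le> i" "i < h" "z' = flip_op m i y'" by (auto simp: flip_steps_def)
    then show ?thesis using key[OF i(1,2)] by blast
  next
    case False
    then have "(z', y') \<in> flip_steps m h (ph u) (ph v)" using step.hyps(2) by (auto simp: fstep_def)
    then obtain i where i: "1 \<le> i" "i < h" "y' = flip_op m i z'" "z' \<in> paths m h (ph u) (ph v)"
      by (auto simp: flip_steps_def)
    have "z' = flip_op m i y'" using flip_op_invol[OF i(4) i(1,2)] i(3) by simp
    then show ?thesis using key[OF i(1,2)] by blast
  qed
qed

lemma F'_eq: "map ph ` FF = {q'. (map ph p0, q') \<in> (fstep m h (ph u) (ph v))\<^sup>*}"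
  using closure_sub closure_sup by blast

lemma flipclass_F': "flipclass m h (map ph ` FF)"
proof -
  have "map ph p0 \<in> paths m h (ph u) (ph v)" using PT[OF p0 Edef[symmetric]] .
  then show ?thesis unfolding flipclass_def using F'_eq unfolding fstep_def by blast
qed

lemma labels_inj: "inj_on (psi E) (fc_labels FF)"
proof (rule inj_onI)
  fix t s assume t: "t \<in> fc_labels FF" and s: "s \<in> fc_labels FF" and e: "psi E t = psi E s"
  obtain q1 where q1: "q1 \<in> FF" "t \<in> set (labels q1)" using t by (auto simp: fc_labels_def)
  obtain q2 where q2: "q2 \<in> FF" "s \<in> set (labels q2)" using s by (auto simp: fc_labels_def)
  obtain \<alpha> \<beta> where ab: "\<alpha> < \<beta>" "\<alpha> \<in> E" "\<beta> \<in> E" "t = transpose \<alpha> \<beta>"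
    using LT[OF _ _ q1(2)] inF[OF q1(1)] by blast
  obtain \<gamma> \<delta> where cd: "\<gamma> < \<delta>" "\<gamma> \<in> E" "\<delta> \<in> E" "s = transpose \<gamma> \<delta>"
    using LT[OF _ _ q2(2)] inF[OF q2(1)] by blast
  have "transpose (rk E \<alpha>) (rk E \<beta>) = transpose (rk E \<gamma>) (rk E \<delta>)"
    using e psi_transpose ab cd by simp
  moreover have "rk E \<alpha> < rk E \<beta>" "rk E \<gamma> < rk E \<delta>" using rk_mono[OF finE] ab cd by auto
  ultimately have "rk E \<alpha> = rk E \<gamma> \<and> rk E \<beta> = rk E \<delta>"
    using transpose_eq_transpose[of "rk E \<alpha>" "rk E \<beta>" "rk E \<gamma>" "rk E \<delta>"] by force
  then have "\<alpha> = \<gamma> \<and> \<beta> = \<delta>" using inj_onD[OF rk_inj[OF finE]] ab cd by metis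
  then show "t = s" using ab cd by simp
qed

lemma iso: "fc_iso n m h FF (map ph ` FF)"
proof -
  have VC: "fc_verts FF \<subseteq> Cset E u" using vert_C inF by (force simp: fc_verts_def)
  have fv: "fc_verts (map ph ` FF) = ph ` fc_verts FF" by (auto simp: fc_verts_def)
  have A1: "bij_betw ph (fc_verts FF) (fc_verts (map ph ` FF))"
    unfolding bij_betw_def fv using inj_on_subset[OF phi_inj VC] by simp
  have "inj_on (map ph) FF"
  proof (rule inj_onI)
    fix x y assume x: "x \<in> FF" and y: "y \<in> FF" and e: "map ph x = map ph y"
    have "set x \<union> set y \<subseteq> Cset E u" using vert_C inF x y by blast
    then show "x = y" using map_inj_on[OF e] inj_on_subset[OF phi_inj] by blast
  qed
  then have A2: "bij_betw (map ph) FF (map ph ` FF)" by (rule inj_on_imp_bij_betw)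
  have A3: "\<forall>p\<in>FF. \<forall>i. 1 \<le> i \<and> i < h \<longrightarrow> map ph (flip_op n i p) = flip_op m i (map ph p)"
    using FC inF by blast
  have fl: "fc_labels (map ph ` FF) = psi E ` fc_labels FF"
    using LAB inF by (auto simp: fc_labels_def)
  have A4: "bij_betw (psi E) (fc_labels FF) (fc_labels (map ph ` FF))"
    unfolding bij_betw_def fl using labels_inj by simp
  have A5: "\<forall>p\<in>FF. labels (map ph p) = map (psi E) (labels p)" using LAB inF by blast
  have A6: "\<forall>t\<in>fc_labels FF. \<forall>s\<in>fc_labels FF. tlex_less t s \<longrightarrow> tlex_less (psi E t) (psi E s)"
  proof (intro ballI impI)
    fix t s assume t: "t \<in> fc_labels FF" and s: "s \<in> fc_labels FF" and l: "tlex_less t s"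
    obtain q1 where q1: "q1 \<in> FF" "t \<in> set (labels q1)" using t by (auto simp: fc_labels_def)
    obtain q2 where q2: "q2 \<in> FF" "s \<in> set (labels q2)" using s by (auto simp: fc_labels_def)
    obtain \<alpha> \<beta> where ab: "\<alpha> < \<beta>" "\<alpha> \<in> E" "\<beta> \<in> E" "t = transpose \<alpha> \<beta>"
      using LT[OF _ _ q1(2)] inF[OF q1(1)] by blast
    obtain \<gamma> \<delta> where cd: "\<gamma> < \<delta>" "\<gamma> \<in> E" "\<delta> \<in> E" "s = transpose \<gamma> \<delta>"
      using LT[OF _ _ q2(2)] inF[OF q2(1)] by blast
    have r1: "rk E \<alpha> < rk E \<beta>" "rk E \<gamma> < rk E \<delta>" using rk_mono[OF finE] ab cd by auto
    have pt: "psi E t = transpose (rk E \<alpha>) (rk E \<beta>)" "psi E s = transpose (rk E \<gamma>) (rk E \<delta>)"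
      using psi_transpose ab cd by auto
    have l': "\<alpha> < \<gamma> \<or> (\<alpha> = \<gamma> \<and> \<beta> < \<delta>)"
      using l unfolding tlex_less_def ab(4) cd(4) tpair_transpose[OF ab(1)] tpair_transpose[OF cd(1)] by simp
    have "rk E \<alpha> < rk E \<gamma> \<or> (rk E \<alpha> = rk E \<gamma> \<and> rk E \<beta> < rk E \<delta>)"
      using l' rk_mono[OF finE] ab cd by auto
    then show "tlex_less (psi E t) (psi E s)"
      unfolding tlex_less_def pt tpair_transpose[OF r1(1)] tpair_transpose[OF r1(2)] by simp
  qed
show ?thesis unfolding fc_iso_def using A1 A2 A3 A4 A5 A6 by blast
qed

end


lemma conn_bound:
  fixes V :: "nat set" and L :: "(nat \<Rightarrow> nat) set"
  assumes finV: "finite V" and finL: "finite L"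
    and conn: "\<forall>a\<in>V. \<forall>b\<in>V. (a, b) \<in> {(x, y). x \<noteq> y \<and> transpose x y \<in> L}\<^sup>*"
  shows "card V \<le> Suc (card L)"
proof (cases "V = {}")
  case True then show ?thesis by simp
next
  case False
  then obtain a0 where a0: "a0 \<in> V" by blast
  define R where "R = {(x, y). x \<noteq> y \<and> transpose x y \<in> L}"
  define d where "d b = (LEAST k. (a0, b) \<in> R ^^ k)" for b
  have reach: "(a0, b) \<in> R ^^ d b" if "b \<in> V" for b
  proof -
    have "(a0, b) \<in> R\<^sup>*" using conn a0 that unfolding R_def by blast
    then obtain k where "(a0, b) \<in> R ^^ k" using rtrancl_power by blast
    then show ?thesis unfolding d_def by (rule LeastI)
  qed
  define pr where "pr b = (SOME c. (a0, c) \<in> R ^^ (d b - 1) \<and> (c, b) \<in> R)" for b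
  have prp: "(a0, pr b) \<in> R ^^ (d b - 1) \<and> (pr b, b) \<in> R \<and> d b \<noteq> 0" if b: "b \<in> V - {a0}" for b
  proof -
    have r: "(a0, b) \<in> R ^^ d b" using reach b by blast
    have "d b \<noteq> 0"
    proof
      assume "d b = 0"
      then have "a0 = b" using r by simp
      then show False using b by simp
    qed
    then obtain k where k: "d b = Suc k" using not0_implies_Suc by blast
    then obtain c where "(a0, c) \<in> R ^^ k" "(c, b) \<in> R" using r by (auto elim: relpow_Suc_E)
    then have "\<exists>c. (a0, c) \<in> R ^^ (d b - 1) \<and> (c, b) \<in> R" using k by auto
    then show ?thesis unfolding pr_def using \<open>d b \<noteq> 0\<close> by (metis (mono_tags, lifting) someI_ex)
  qed
  have dpr: "d (pr b) = d b - 1" if b: "b \<in> V - {a0}" for b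
  proof -
    have p: "(a0, pr b) \<in> R ^^ (d b - 1)" "(pr b, b) \<in> R" "d b \<noteq> 0" using prp[OF b] by auto
    have le: "d (pr b) \<le> d b - 1" unfolding d_def[of "pr b"] by (rule Least_le) (rule p(1))
    have "(a0, pr b) \<in> R ^^ d (pr b)" unfolding d_def[of "pr b"] by (rule LeastI) (rule p(1))
    then have "(a0, b) \<in> R ^^ Suc (d (pr b))" using p(2) by (rule relpow_Suc_I)
    then have "d b \<le> Suc (d (pr b))" unfolding d_def[of b] by (rule Least_le)
    then show ?thesis using le p(3) by simp
  qed
  define f where "f b = transpose (pr b) b" for b
  have fL: "f ` (V - {a0}) \<subseteq> L"
  proof
    fix t assume "t \<in> f ` (V - {a0})"
    then obtain b where b: "b \<in> V - {a0}" "t = f b" by blast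
    then show "t \<in> L" using prp[OF b(1)] unfolding f_def R_def by auto
  qed
  have inj: "inj_on f (V - {a0})"
  proof (rule inj_onI)
    fix b1 b2 assume b1: "b1 \<in> V - {a0}" and b2: "b2 \<in> V - {a0}" and e: "f b1 = f b2"
    have ne: "pr b1 \<noteq> b1" using prp[OF b1] unfolding R_def by auto
    have "(pr b1 = pr b2 \<and> b1 = b2) \<or> (pr b1 = b2 \<and> b1 = pr b2)"
      using transpose_eq_transpose[OF ne] e unfolding f_def by blast
    then show "b1 = b2"
    proof
      assume c: "pr b1 = b2 \<and> b1 = pr b2"
      have c1: "pr b1 = b2" and c2: "pr b2 = b1" using c by auto
      have "d (pr b1) = d b1 - 1" by (rule dpr[OF b1])
      then have "d b2 = d b1 - 1" unfolding c1 .
      moreover have "d (pr b2) = d b2 - 1" by (rule dpr[OF b2])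
      then have "d b1 = d b2 - 1" unfolding c2 .
      moreover have "d b1 \<noteq> 0" "d b2 \<noteq> 0" using prp[OF b1] prp[OF b2] by auto
      ultimately show "b1 = b2" by simp
    qed simp
  qed
  have "card (V - {a0}) \<le> card L" using card_inj_on_le[OF inj fL finL] .
  moreover have "card V = Suc (card (V - {a0}))" by (rule card_Suc_Diff1[OF finV a0, symmetric])
  ultimately show ?thesis by simp
qed

lemma fsettingI:
  assumes p0: "p0 \<in> paths n h u v" and m: "card (Gverts p0) \<le> m"
  shows "fsetting (Gverts p0) u n h v p0 m"
proof -
  let ?E = "Gverts p0"
  note P = pathsD[OF p0]
  have fs: "finite (supp (p0 ! Suc k \<circ> inv (p0 ! k)))" if k: "k < h" for k
  proof -
    obtain \<alpha> \<beta> where "\<alpha> \<noteq> \<beta>" "p0 ! Suc k \<circ> inv (p0 ! k) = transpose \<alpha> \<beta>"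
      using path_step_transp[OF p0 k] by blast
    then show ?thesis using supp_transpose by simp
  qed
  have finE: "finite ?E" unfolding Gverts_nth[OF P(1)] using fs by blast
  have bu: "bij_betw u (u -` ?E) ?E"
  proof (cases "h = 0")
    case True
    then have "?E = {}" unfolding Gverts_nth[OF P(1)] by simp
    then show ?thesis by (simp add: bij_betw_def)
  next
    case False
    then have "bedge n (p0 ! 0) (p0 ! Suc 0)" using P(4)[of 0] by simp
    then have "u permutes {1..n}" using bedge_perm P(2) by blast
    then have b: "bij u" by (rule permutes_bij)
    show ?thesis unfolding bij_betw_def
    proof
      show "inj_on u (u -` ?E)" using b bij_is_inj inj_on_subset by blast
      show "u ` (u -` ?E) = ?E" by (simp add: image_vimage_eq bij_is_surj[OF b])
    qed
  qed
  show ?thesis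
    by (intro fsetting.intro setting.intro fsetting_axioms.intro finE bu p0 refl m)
qed

theorem theorem6p12:
  fixes n h :: nat and F :: "(nat \<Rightarrow> nat) list set"
  assumes "flipclass n h F"
  shows "(\<exists>F'. flipclass (card (EF F)) h F' \<and> fc_iso n (card (EF F)) h F F') \<and>
         (irreducible_fc F \<longrightarrow> (\<exists>F'. flipclass (Suc h) h F' \<and> fc_iso n (Suc h) h F F'))"
proof -
  obtain u v p0 where p0: "p0 \<in> paths n h u v"
    and F: "F = {q. (p0, q) \<in> (flip_steps n h u v \<union> (flip_steps n h u v)\<inverse>)\<^sup>*}"
    using assms unfolding flipclass_def by blast
  let ?E = "Gverts p0"
  have FF: "F = {q. (p0, q) \<in> (fstep n h u v)\<^sup>*}" unfolding F fstep_def ..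
  have inv: "q \<in> paths n h u v \<and> Gverts q = ?E" if "q \<in> F" for q
    using flipclass_inv[OF p0] that unfolding FF by blast
  have p0F: "p0 \<in> F" unfolding FF by simp
  have EF: "EF F = ?E"
  proof -
    have "(SOME p. p \<in> F) \<in> F" using p0F by (rule someI)
    then show ?thesis unfolding EF_def using inv by blast
  qed
  have main: "\<exists>F'. flipclass m h F' \<and> fc_iso n m h F F'" if m: "card ?E \<le> m" for m
  proof -
    have fs: "fsetting ?E u n h v p0 m" by (rule fsettingI[OF p0 m])
    show ?thesis using fsetting.flipclass_F'[OF fs] fsetting.iso[OF fs] unfolding FF by blast
  qed
  have part1: "\<exists>F'. flipclass (card (EF F)) h F' \<and> fc_iso n (card (EF F)) h F F'"
    using main[of "card (EF F)"] EF by simp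
  have part2: "\<exists>F'. flipclass (Suc h) h F' \<and> fc_iso n (Suc h) h F F'" if irr: "irreducible_fc F"
  proof -
    obtain p where p: "p \<in> F" "Gconnected p" using irr unfolding irreducible_fc_def by blast
    have pi: "p \<in> paths n h u v" "Gverts p = ?E" using inv[OF p(1)] by auto
    have finE: "finite ?E" using fsetting.axioms(1)[OF fsettingI[OF p0 order_refl]] setting.finE by blast
    have "card (Gverts p) \<le> Suc (card (set (labels p)))"
      using p(2) unfolding Gconnected_def by (intro conn_bound) (use finE pi(2) in auto)
    also have "card (set (labels p)) \<le> h"
      using card_length[of "labels p"] pathsD(1)[OF pi(1)] by (simp add: length_labels)
    finally have "card ?E \<le> Suc h" using pi(2) by simp
    then show ?thesis by (rule main)
  qed
  show ?thesis using part1 part2 by blast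
qed

end
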